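(* Let $0<\lambda<4$ and $\theta\in(0,1)$. There exist constants $T_1=T_1(\lambda,\theta)>0$, $N_2=N_2(\lambda,\theta)$, $C_2=C_2(\lambda,\theta)>0$ and $C_3=C_3(\lambda,\theta)$ such that for every $n\ge N_2$, \[ P^{n,0}_{\lambda,n}\Big(\sup_{0\le t\le C_2\sqrt n}\frac{\|(B_{T_1+t},G_{T_1+t})\|_1}{n}\ge\frac{\theta}{(3+\theta)\lambda}\Big)\le\frac{C_3}{\sqrt n}. \]
   Context: Fix $n\ge1$ and $\lambda>0$. $(B_t,G_t)_{t\ge0}$ is the continuous-time Markov chain on $\{(B,G)\in\mathbb{Z}_{\ge0}^2:B+G\le n\}$ with transitions: - $(B,G)\to(B-1,G)$ at rate $B$; - $(B,G)\to(B,G-1)$ at rate $G$; - $(B,G)\to(B+1,G-1)$ at rate $\frac{\lambda}{n}BG$; - $(B,G)\to(B,G+1)$ at rate $\frac{\lambda}{n}B(n-B-G)$. These are the counts of wholly- and semi-infected vertices in the contact process with semi-infected state on the complete graph with $n$ vertices. $P^{n,0}_{\lambda,n}$ is its law with $(B_0,G_0)=(n,0)$. $\|(x,y)\|_1=|x|+|y|$. *)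

theory Defs
  imports "HOL-Probability.Probability"
begin

text \<open>
  Continuous-time Markov chain of the contact process with semi-infected state
  on the complete graph K_n, constructed pathwise in the standard way
  (jump chain + exponential holding times) from an i.i.d. sequence of pairs
  (E_k, U_k) with E_k ~ Exp(1) and U_k ~ Uniform[0,1], all independent.
\<close>

type_synonym cstate = "nat \<times> nat"

definition csi_trans :: "nat \<Rightarrow> real \<Rightarrow> cstate \<Rightarrow> (real \<times> cstate) list" where
  "csi_trans n lam s = (case s of (B, G) \<Rightarrow>
     [ (real B, (B - 1, G)),
       (real G, (B, G - 1)),
       (lam / real n * real B * real G, (B + 1, G - 1)),
       (lam / real n * real B * (real n - real B - real G), (B, G + 1)) ])"

definition csi_qtot :: "nat \<Rightarrow> real \<Rightarrow> cstate \<Rightarrow> real" where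
  "csi_qtot n lam s = sum_list (map fst (csi_trans n lam s))"

fun csi_select :: "real \<Rightarrow> (real \<times> cstate) list \<Rightarrow> cstate \<Rightarrow> cstate" where
  "csi_select u [] s = s"
| "csi_select u ((r, t) # xs) s = (if u < r then t else csi_select (u - r) xs s)"

definition csi_step :: "nat \<Rightarrow> real \<Rightarrow> cstate \<Rightarrow> real \<Rightarrow> cstate" where
  "csi_step n lam s u =
     (if csi_qtot n lam s = 0 then s
      else csi_select (u * csi_qtot n lam s) (csi_trans n lam s) s)"

text \<open>Holding time in state s driven by an Exp(1) variable e (absorbing: dummy time 1).\<close>
definition csi_hold :: "nat \<Rightarrow> real \<Rightarrow> cstate \<Rightarrow> real \<Rightarrow> real" where
  "csi_hold n lam s e = (if csi_qtot n lam s = 0 then 1 else e / csi_qtot n lam s)"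

definition csi_space :: "(nat \<Rightarrow> real \<times> real) measure" where
  "csi_space = PiM UNIV (\<lambda>_::nat.
      density lborel (exponential_density 1) \<Otimes>\<^sub>M uniform_measure lborel {0..1::real})"

fun csi_jump :: "nat \<Rightarrow> real \<Rightarrow> cstate \<Rightarrow> (nat \<Rightarrow> real \<times> real) \<Rightarrow> nat \<Rightarrow> cstate" where
  "csi_jump n lam s0 \<omega> 0 = s0"
| "csi_jump n lam s0 \<omega> (Suc k) = csi_step n lam (csi_jump n lam s0 \<omega> k) (snd (\<omega> k))"

fun csi_time :: "nat \<Rightarrow> real \<Rightarrow> cstate \<Rightarrow> (nat \<Rightarrow> real \<times> real) \<Rightarrow> nat \<Rightarrow> real" where
  "csi_time n lam s0 \<omega> 0 = 0"
| "csi_time n lam s0 \<omega> (Suc k) =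
     csi_time n lam s0 \<omega> k + csi_hold n lam (csi_jump n lam s0 \<omega> k) (fst (\<omega> k))"

text \<open>The process (B_t, G_t) (right-continuous; arbitrary value (0,0) after an
  explosion, which has probability zero).\<close>
definition csi_proc :: "nat \<Rightarrow> real \<Rightarrow> cstate \<Rightarrow> (nat \<Rightarrow> real \<times> real) \<Rightarrow> real \<Rightarrow> cstate" where
  "csi_proc n lam s0 \<omega> t =
     (if \<exists>k. t < csi_time n lam s0 \<omega> k
      then csi_jump n lam s0 \<omega> ((LEAST k. t < csi_time n lam s0 \<omega> k) - 1)
      else (0, 0))"

end

theory Submission
  imports Defs
begin

definition nu :: "(real \<times> real) measure" where
 "nu = density lborel (exponential_density 1) \<Otimes>\<^sub>M uniform_measure lborel {0..1::real}"

lemma csi_space_eq: "csi_space = PiM UNIV (\<lambda>_. nu)" by (simp add: csi_space_def nu_def)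

lemma prob_nu: "prob_space nu"
  unfolding nu_def by (intro prob_space_pair prob_space_exponential_density prob_space_uniform_measure) auto

lemma seq_nu: "sequence_space nu"
  unfolding sequence_space_def product_prob_space_def product_prob_space_axioms_def product_sigma_finite_def
  using prob_nu by (auto simp: prob_space_imp_sigma_finite)

lemma prob_csi: "prob_space csi_space"
proof -
  interpret S: sequence_space nu by (rule seq_nu)
  show ?thesis unfolding csi_space_eq by (rule S.prob_space_axioms)
qed

lemma int_split:
  assumes [measurable]: "F \<in> borel_measurable csi_space"
  shows "(\<integral>\<^sup>+\<omega>. F \<omega> \<partial>csi_space) = (\<integral>\<^sup>+w. (\<integral>\<^sup>+\<omega>. F (case_nat w \<omega>) \<partial>csi_space) \<partial>nu)"
proof -
  interpret S: sequence_space nu by (rule seq_nu)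
  interpret P: pair_sigma_finite nu "\<Pi>\<^sub>M i::nat\<in>UNIV. nu" ..
  have F[measurable]: "F \<in> borel_measurable S.S" using assms unfolding csi_space_eq .
  have "(\<integral>\<^sup>+\<omega>. F \<omega> \<partial>S.S) = (\<integral>\<^sup>+X. F ((\<lambda>(s, \<omega>). case_nat s \<omega>) X) \<partial>(nu \<Otimes>\<^sub>M S.S))"
    by (subst S.PiM_iter[symmetric]) (simp add: nn_integral_distr)
  also have "\<dots> = (\<integral>\<^sup>+x. \<integral>\<^sup>+X. F ((\<lambda>(s, \<omega>). case_nat s \<omega>) (x, X)) \<partial>S.S \<partial>nu)"
    by (subst S.nn_integral_fst) simp_all
  finally show ?thesis unfolding csi_space_eq by simp
qed

fun chainF :: "('s \<Rightarrow> real \<times> real \<Rightarrow> 's) \<Rightarrow> 's \<Rightarrow> (nat \<Rightarrow> real \<times> real) \<Rightarrow> nat \<Rightarrow> 's" where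
  "chainF st y \<omega> 0 = y"
| "chainF st y \<omega> (Suc k) = chainF st (st y (\<omega> 0)) (\<lambda>i. \<omega> (Suc i)) k"

lemma chainF_Suc': "chainF st y \<omega> (Suc k) = st (chainF st y \<omega> k) (\<omega> k)"
proof (induction k arbitrary: y \<omega>)
  case 0 show ?case by simp
next
  case (Suc k)
  have "chainF st y \<omega> (Suc (Suc k)) = chainF st (st y (\<omega> 0)) (\<lambda>i. \<omega> (Suc i)) (Suc k)"
    by (simp only: chainF.simps)
  also have "\<dots> = st (chainF st (st y (\<omega> 0)) (\<lambda>i. \<omega> (Suc i)) k) (\<omega> (Suc k))"
    by (rule Suc.IH)
  also have "\<dots> = st (chainF st y \<omega> (Suc k)) (\<omega> (Suc k))"
    by (simp only: chainF.simps)
  finally show ?case .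
qed

lemma chainF_case_nat: "chainF st y (case_nat w \<omega>) (Suc k) = chainF st (st y w) \<omega> k"
  by simp

lemma chain_super:
  fixes \<phi> :: "'s \<Rightarrow> ennreal"
  assumes inv: "\<And>y w. y \<in> Sp \<Longrightarrow> st y w \<in> Sp"
   and meas: "\<And>y k. y \<in> Sp \<Longrightarrow> (\<lambda>\<omega>. \<phi> (chainF st y \<omega> k)) \<in> borel_measurable csi_space"
   and drift: "\<And>y. y \<in> Sp \<Longrightarrow> (\<integral>\<^sup>+w. \<phi> (st y w) \<partial>nu) \<le> \<phi> y"
  shows "y \<in> Sp \<Longrightarrow> (\<integral>\<^sup>+\<omega>. \<phi> (chainF st y \<omega> k) \<partial>csi_space) \<le> \<phi> y"
proof (induction k arbitrary: y)
  case 0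
  interpret prob_space csi_space by (rule prob_csi)
  show ?case by (simp add: emeasure_space_1)
next
  case (Suc k)
  have "(\<integral>\<^sup>+\<omega>. \<phi> (chainF st y \<omega> (Suc k)) \<partial>csi_space)
     = (\<integral>\<^sup>+w. (\<integral>\<^sup>+\<omega>. \<phi> (chainF st y (case_nat w \<omega>) (Suc k)) \<partial>csi_space) \<partial>nu)"
    by (rule int_split[OF meas[OF Suc.prems]])
  also have "\<dots> = (\<integral>\<^sup>+w. (\<integral>\<^sup>+\<omega>. \<phi> (chainF st (st y w) \<omega> k) \<partial>csi_space) \<partial>nu)"
    by simp
  also have "\<dots> \<le> (\<integral>\<^sup>+w. \<phi> (st y w) \<partial>nu)"
    by (intro nn_integral_mono Suc.IH inv Suc.prems)
  also have "\<dots> \<le> \<phi> y" by (rule drift[OF Suc.prems])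
  finally show ?case .
qed

declare chainF.simps(2)[simp del]

lemma chainF_meas:
  fixes st :: "'s::countable \<Rightarrow> real \<times> real \<Rightarrow> 's"
  assumes stm: "\<And>y. st y \<in> measurable nu (count_space UNIV)"
  shows "(\<lambda>\<omega>. chainF st y \<omega> k) \<in> measurable csi_space (count_space UNIV)"
proof (induction k)
  case 0 show ?case by simp
next
  case (Suc k)
  have c: "(\<lambda>\<omega>. \<omega> k) \<in> measurable csi_space nu"
    unfolding csi_space_eq by (rule measurable_component_singleton) simp
  have "(\<lambda>\<omega>. st (chainF st y \<omega> k) (\<omega> k)) \<in> measurable csi_space (count_space UNIV)"
    by (rule measurable_compose_countable[where g="\<lambda>\<omega>. chainF st y \<omega> k" and f="\<lambda>i \<omega>. st i (\<omega> k)"])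
       (auto intro: measurable_compose[OF c stm] Suc)
  then show ?case by (simp only: chainF_Suc')
qed

lemma ville:
  fixes st :: "'s::countable \<Rightarrow> real \<times> real \<Rightarrow> 's" and \<phi> :: "'s \<Rightarrow> ennreal"
  assumes inv: "\<And>y w. y \<in> Sp \<Longrightarrow> st y w \<in> Sp"
   and stm: "\<And>y. st y \<in> measurable nu (count_space UNIV)"
   and drift: "\<And>y. y \<in> Sp \<Longrightarrow> (\<integral>\<^sup>+w. \<phi> (st y w) \<partial>nu) \<le> \<phi> y"
   and y: "y \<in> Sp"
  shows "{\<omega>\<in>space csi_space. \<exists>k. a \<le> \<phi> (chainF st y \<omega> k)} \<in> sets csi_space"
    and "a * emeasure csi_space {\<omega>\<in>space csi_space. \<exists>k. a \<le> \<phi> (chainF st y \<omega> k)} \<le> \<phi> y"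
proof -
  define st' where "st' = (\<lambda>y w. if a \<le> \<phi> y then y else st y w)"
  have inv': "\<And>y w. y \<in> Sp \<Longrightarrow> st' y w \<in> Sp" using inv by (simp add: st'_def)
  have stm': "\<And>y. st' y \<in> measurable nu (count_space UNIV)"
    using stm by (simp add: st'_def)
  have cm: "\<And>k y. (\<lambda>\<omega>. chainF st y \<omega> k) \<in> measurable csi_space (count_space UNIV)"
    by (rule chainF_meas[OF stm])
  have cm': "\<And>k y. (\<lambda>\<omega>. chainF st' y \<omega> k) \<in> measurable csi_space (count_space UNIV)"
    by (rule chainF_meas[OF stm'])
  have phim: "\<And>k y. (\<lambda>\<omega>. \<phi> (chainF st' y \<omega> k)) \<in> borel_measurable csi_space"
    by (rule measurable_compose[OF cm']) simp
  have drift': "\<And>y. y \<in> Sp \<Longrightarrow> (\<integral>\<^sup>+w. \<phi> (st' y w) \<partial>nu) \<le> \<phi> y"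
  proof -
    fix y assume "y \<in> Sp"
    interpret prob_space nu by (rule prob_nu)
    show "(\<integral>\<^sup>+w. \<phi> (st' y w) \<partial>nu) \<le> \<phi> y"
      using drift[OF \<open>y \<in> Sp\<close>] by (cases "a \<le> \<phi> y") (simp_all add: st'_def emeasure_space_1)
  qed
  define E where "E N = {\<omega>\<in>space csi_space. a \<le> \<phi> (chainF st' y \<omega> N)}" for N
  have Es: "E N \<in> sets csi_space" for N
  proof -
    have "(\<lambda>\<omega>. chainF st' y \<omega> N) -` {z. a \<le> \<phi> z} \<inter> space csi_space \<in> sets csi_space"
      by (rule measurable_sets[OF cm']) simp
    moreover have "E N = (\<lambda>\<omega>. chainF st' y \<omega> N) -` {z. a \<le> \<phi> z} \<inter> space csi_space"
      unfolding E_def by auto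
    ultimately show ?thesis by simp
  qed
  have stay: "a \<le> \<phi> (chainF st' y \<omega> N) \<Longrightarrow> chainF st' y \<omega> (N + j) = chainF st' y \<omega> N" for \<omega> N j
    by (induction j) (auto simp: chainF_Suc' st'_def)
  have inc: "incseq E"
    unfolding incseq_def E_def
  proof (intro allI impI subsetI)
    fix m n \<omega> assume "m \<le> n" "\<omega> \<in> {\<omega> \<in> space csi_space. a \<le> \<phi> (chainF st' y \<omega> m)}"
    then show "\<omega> \<in> {\<omega> \<in> space csi_space. a \<le> \<phi> (chainF st' y \<omega> n)}"
      using stay[of \<omega> m "n - m"] by auto
  qed
  have agree: "(\<forall>j<k. \<not> a \<le> \<phi> (chainF st y \<omega> j)) \<Longrightarrow> chainF st' y \<omega> k = chainF st y \<omega> k" for k \<omega>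
    by (induction k) (auto simp: chainF_Suc' st'_def)
  have bck: "chainF st' y \<omega> N = chainF st y \<omega> N \<or> (\<exists>k\<le>N. a \<le> \<phi> (chainF st y \<omega> k) \<and> chainF st' y \<omega> N = chainF st y \<omega> k)" for \<omega> N
  proof (induction N)
    case 0 then show ?case by simp
  next
    case (Suc N)
    then show ?case
    proof
      assume h: "chainF st' y \<omega> N = chainF st y \<omega> N"
      show ?case
      proof (cases "a \<le> \<phi> (chainF st y \<omega> N)")
        case True then show ?thesis using h by (auto simp: chainF_Suc' st'_def intro!: exI[of _ N])
      next
        case False then show ?thesis using h by (auto simp: chainF_Suc' st'_def)
      qed
    next
      assume "\<exists>k\<le>N. a \<le> \<phi> (chainF st y \<omega> k) \<and> chainF st' y \<omega> N = chainF st y \<omega> k"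
      then obtain k where "k \<le> N" "a \<le> \<phi> (chainF st y \<omega> k)" "chainF st' y \<omega> N = chainF st y \<omega> k" by blast
      then show ?case by (auto simp: chainF_Suc' st'_def intro!: exI[of _ k])
    qed
  qed
  have eq: "{\<omega>\<in>space csi_space. \<exists>k. a \<le> \<phi> (chainF st y \<omega> k)} = (\<Union>N. E N)"
  proof (intro set_eqI iffI)
    fix \<omega> assume "\<omega> \<in> {\<omega>\<in>space csi_space. \<exists>k. a \<le> \<phi> (chainF st y \<omega> k)}"
    then have sp: "\<omega> \<in> space csi_space" and ex: "\<exists>k. a \<le> \<phi> (chainF st y \<omega> k)" by auto
    define k0 where "k0 = (LEAST k. a \<le> \<phi> (chainF st y \<omega> k))"
    have k0: "a \<le> \<phi> (chainF st y \<omega> k0)" unfolding k0_def by (rule LeastI_ex[OF ex])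
    have "\<forall>j<k0. \<not> a \<le> \<phi> (chainF st y \<omega> j)" unfolding k0_def using not_less_Least by blast
    then have "chainF st' y \<omega> k0 = chainF st y \<omega> k0" by (rule agree)
    then have "\<omega> \<in> E k0" using k0 sp by (simp add: E_def)
    then show "\<omega> \<in> (\<Union>N. E N)" by blast
  next
    fix \<omega> assume "\<omega> \<in> (\<Union>N. E N)"
    then obtain N where "\<omega> \<in> space csi_space" "a \<le> \<phi> (chainF st' y \<omega> N)" by (auto simp: E_def)
    then show "\<omega> \<in> {\<omega>\<in>space csi_space. \<exists>k. a \<le> \<phi> (chainF st y \<omega> k)}"
      using bck[of \<omega> N] by auto
  qed
  show "{\<omega>\<in>space csi_space. \<exists>k. a \<le> \<phi> (chainF st y \<omega> k)} \<in> sets csi_space"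
    unfolding eq using Es by auto
  have bnd: "a * emeasure csi_space (E N) \<le> \<phi> y" for N
  proof -
    have "a * emeasure csi_space (E N) = (\<integral>\<^sup>+\<omega>. a * indicator (E N) \<omega> \<partial>csi_space)"
      using Es by (simp add: nn_integral_cmult_indicator)
    also have "\<dots> \<le> (\<integral>\<^sup>+\<omega>. \<phi> (chainF st' y \<omega> N) \<partial>csi_space)"
      by (intro nn_integral_mono) (auto simp: E_def split: split_indicator)
    also have "\<dots> \<le> \<phi> y"
      by (rule chain_super[OF inv' phim drift' y])
    finally show ?thesis .
  qed
  have "a * emeasure csi_space (\<Union>N. E N) = a * (SUP N. emeasure csi_space (E N))"
  proof -
    have "range E \<subseteq> sets csi_space" using Es by auto
    from SUP_emeasure_incseq[OF this inc] show ?thesis by simp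
  qed
  also have "\<dots> = (SUP N. a * emeasure csi_space (E N))"
    by (simp add: SUP_mult_left_ennreal)
  also have "\<dots> \<le> \<phi> y" by (intro SUP_least bnd)
  finally show "a * emeasure csi_space {\<omega>\<in>space csi_space. \<exists>k. a \<le> \<phi> (chainF st y \<omega> k)} \<le> \<phi> y"
    unfolding eq .
qed

lemma select_meas: "(\<lambda>v. csi_select v xs s) \<in> measurable borel (count_space UNIV)"
proof (induction xs)
  case Nil then show ?case by simp
next
  case (Cons p xs)
  obtain r t where p: "p = (r, t)" by (cases p)
  have m2: "(\<lambda>v. csi_select (v - r) xs s) \<in> measurable borel (count_space UNIV)"
    by (rule measurable_compose[OF _ Cons]) simp
  have "(\<lambda>v. if v < r then t else csi_select (v - r) xs s) \<in> measurable borel (count_space UNIV)"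
    by (rule measurable_If[OF measurable_const m2]) measurable
  then show ?case by (simp add: p)
qed

lemma select_integral:
  fixes g :: "cstate \<Rightarrow> real"
  assumes "\<forall>p\<in>set xs. 0 \<le> fst p" and g: "\<And>t. 0 \<le> g t"
  shows "(\<integral>\<^sup>+v. indicator {c..<c + sum_list (map fst xs)} v * ennreal (g (csi_select (v - c) xs s)) \<partial>lborel)
     = ennreal (sum_list (map (\<lambda>(r,t). r * g t) xs))"
  using assms(1)
proof (induction xs arbitrary: c)
  case Nil then show ?case by simp
next
  case (Cons p xs)
  obtain r t where p: "p = (r, t)" by (cases p)
  define R where "R = sum_list (map fst xs)"
  have r0: "0 \<le> r" using Cons.prems p by auto
  have R0: "0 \<le> R" unfolding R_def using Cons.prems by (intro sum_list_nonneg) auto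
  have IH: "(\<integral>\<^sup>+v. indicator {c + r..<c + r + R} v * ennreal (g (csi_select (v - (c + r)) xs s)) \<partial>lborel)
     = ennreal (sum_list (map (\<lambda>(r,t). r * g t) xs))"
    using Cons.IH[of "c + r"] Cons.prems unfolding R_def by (simp add: add.assoc)
  have m: "(\<lambda>v. ennreal (g (csi_select (v - (c + r)) xs s))) \<in> borel_measurable borel"
  proof -
    have "(\<lambda>v. csi_select (v - (c + r)) xs s) \<in> measurable borel (count_space UNIV)"
      by (rule measurable_compose[OF _ select_meas]) simp
    then show ?thesis by (rule measurable_compose) simp
  qed
  have "(\<integral>\<^sup>+v. indicator {c..<c + sum_list (map fst (p # xs))} v * ennreal (g (csi_select (v - c) (p # xs) s)) \<partial>lborel)
      = (\<integral>\<^sup>+v. indicator {c..<c + r} v * ennreal (g t) + indicator {c + r..<c + r + R} v * ennreal (g (csi_select (v - (c + r)) xs s)) \<partial>lborel)"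
    using r0 R0 by (intro nn_integral_cong) (auto simp: p R_def split: split_indicator simp: algebra_simps)
  also have "\<dots> = (\<integral>\<^sup>+v. indicator {c..<c + r} v * ennreal (g t) \<partial>lborel) + (\<integral>\<^sup>+v. indicator {c + r..<c + r + R} v * ennreal (g (csi_select (v - (c + r)) xs s)) \<partial>lborel)"
    using m by (intro nn_integral_add) auto
  also have "(\<integral>\<^sup>+v. indicator {c..<c + r} v * ennreal (g t) \<partial>lborel) = ennreal r * ennreal (g t)"
  proof -
    have "(\<integral>\<^sup>+v. indicator {c..<c + r} v * ennreal (g t) \<partial>lborel) = (\<integral>\<^sup>+v. ennreal (g t) * indicator {c..<c + r} v \<partial>lborel)"
      by (simp add: mult.commute)
    also have "\<dots> = ennreal (g t) * ennreal r" using r0 by (simp add: nn_integral_cmult_indicator)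
    finally show ?thesis by (simp add: mult.commute)
  qed
  also note IH
  also have "ennreal r * ennreal (g t) + ennreal (sum_list (map (\<lambda>(r,t). r * g t) xs)) = ennreal (sum_list (map (\<lambda>(r,t). r * g t) (p # xs)))"
  proof -
    have "0 \<le> sum_list (map (\<lambda>(r,t). r * g t) xs)"
      using Cons.prems g by (intro sum_list_nonneg) auto
    then show ?thesis using r0 g[of t] by (simp add: p ennreal_mult ennreal_plus)
  qed
  finally show ?case .
qed

lemma nu_snd:
  assumes [measurable]: "F \<in> borel_measurable borel"
  shows "(\<integral>\<^sup>+w. F (snd w) \<partial>nu) = (\<integral>\<^sup>+u. F u * indicator {0..1} u \<partial>lborel)"
proof -
  define D where "D = density lborel (exponential_density 1)"
  define U where "U = uniform_measure lborel {0..1::real}"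
  interpret D: prob_space D unfolding D_def by (rule prob_space_exponential_density) simp
  interpret U: prob_space U unfolding U_def by (rule prob_space_uniform_measure) auto
  interpret P: pair_sigma_finite D U ..
  have sU: "sets U = sets borel" unfolding U_def by simp
  have sD: "sets D = sets borel" unfolding D_def by simp
  have m: "(\<lambda>w. F (snd w)) \<in> borel_measurable (D \<Otimes>\<^sub>M U)"
    by (rule measurable_compose[OF measurable_snd]) (simp add: measurable_cong_sets[OF sU refl])
  have "(\<integral>\<^sup>+w. F (snd w) \<partial>nu) = (\<integral>\<^sup>+ y. (\<integral>\<^sup>+ x. F (snd (x, y)) \<partial>D) \<partial>U)"
    unfolding nu_def D_def[symmetric] U_def[symmetric] using P.nn_integral_snd[OF m] by simp
  also have "\<dots> = (\<integral>\<^sup>+ y. F y \<partial>U)" by (simp add: D.emeasure_space_1)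
  also have "\<dots> = (\<integral>\<^sup>+u. F u * indicator {0..1} u \<partial>lborel)"
    unfolding U_def using mult_divide_eq_ennreal[of 1 "set_nn_integral lborel {0..1} F"]
    by (subst nn_integral_uniform_measure) auto
  finally show ?thesis .
qed

lemma nu_fst:
  assumes [measurable]: "F \<in> borel_measurable borel"
  shows "(\<integral>\<^sup>+w. F (fst w) \<partial>nu) = (\<integral>\<^sup>+x. F x \<partial>density lborel (exponential_density 1))"
proof -
  define D where "D = density lborel (exponential_density 1)"
  define U where "U = uniform_measure lborel {0..1::real}"
  interpret D: prob_space D unfolding D_def by (rule prob_space_exponential_density) simp
  interpret U: prob_space U unfolding U_def by (rule prob_space_uniform_measure) auto
  interpret P: pair_sigma_finite D U ..
  have sD: "sets D = sets borel" unfolding D_def by simp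
  have m: "(\<lambda>w. F (fst w)) \<in> borel_measurable (D \<Otimes>\<^sub>M U)"
    by (rule measurable_compose[OF measurable_fst]) (simp add: measurable_cong_sets[OF sD refl])
  have "(\<integral>\<^sup>+w. F (fst w) \<partial>nu) = (\<integral>\<^sup>+ x. (\<integral>\<^sup>+ y. F (fst (x, y)) \<partial>U) \<partial>D)"
    unfolding nu_def D_def[symmetric] U_def[symmetric] using U.nn_integral_fst[OF m] by simp
  also have "\<dots> = (\<integral>\<^sup>+ x. F x \<partial>D)" by (simp add: U.emeasure_space_1)
  finally show ?thesis unfolding D_def .
qed

lemma step_integral:
  fixes g :: "cstate \<Rightarrow> real"
  assumes g: "\<And>t. 0 \<le> g t" and nn: "\<forall>p\<in>set (csi_trans n lam s). 0 \<le> fst p"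
    and q: "0 < csi_qtot n lam s"
  shows "(\<integral>\<^sup>+w. ennreal (g (csi_step n lam s (snd w))) \<partial>nu)
       = ennreal (sum_list (map (\<lambda>(r,t). r * g t) (csi_trans n lam s)) / csi_qtot n lam s)"
proof -
  define Q where "Q = csi_qtot n lam s"
  define L where "L = csi_trans n lam s"
  have QL: "Q = sum_list (map fst L)" unfolding Q_def L_def csi_qtot_def ..
  have nnL: "\<forall>p\<in>set L. 0 \<le> fst p" using nn unfolding L_def .
  have Q0: "0 < Q" using q unfolding Q_def .
  define F where "F u = ennreal (g (csi_select (u * Q) L s))" for u
  have Fm[measurable]: "F \<in> borel_measurable borel"
  proof -
    have "(\<lambda>u. csi_select (u * Q) L s) \<in> measurable borel (count_space UNIV)"
      by (rule measurable_compose[OF _ select_meas]) simp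
    then show ?thesis unfolding F_def by (rule measurable_compose) simp
  qed
  have "(\<integral>\<^sup>+w. ennreal (g (csi_step n lam s (snd w))) \<partial>nu) = (\<integral>\<^sup>+w. F (snd w) \<partial>nu)"
    using Q0 by (simp add: F_def csi_step_def Q_def L_def)
  also have "\<dots> = (\<integral>\<^sup>+u. F u * indicator {0..1} u \<partial>lborel)" by (rule nu_snd[OF Fm])
  also have "\<dots> = (\<integral>\<^sup>+u. indicator {0..<1} u * F u \<partial>lborel)"
    by (intro nn_integral_cong_AE) (auto simp: AE_lborel_singleton[of 1] split: split_indicator intro!: eventually_mono[OF AE_lborel_singleton[of 1]])
  finally have e1: "(\<integral>\<^sup>+w. ennreal (g (csi_step n lam s (snd w))) \<partial>nu) = (\<integral>\<^sup>+u. indicator {0..<1} u * F u \<partial>lborel)" .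
  define f where "f v = indicator {0..<0 + sum_list (map fst L)} v * ennreal (g (csi_select (v - 0) L s))" for v :: real
  have fm[measurable]: "f \<in> borel_measurable borel"
  proof -
    have "(\<lambda>v. csi_select (v - 0) L s) \<in> measurable borel (count_space UNIV)"
      by (rule measurable_compose[OF _ select_meas]) simp
    then have "(\<lambda>v. ennreal (g (csi_select (v - 0) L s))) \<in> borel_measurable borel"
      by (rule measurable_compose) simp
    then show ?thesis unfolding f_def by measurable
  qed
  have "(\<integral>\<^sup>+v. f v \<partial>lborel) = ennreal (sum_list (map (\<lambda>(r,t). r * g t) L))"
    unfolding f_def by (rule select_integral[OF nnL g])
  moreover have "(\<integral>\<^sup>+v. f v \<partial>lborel) = \<bar>Q\<bar> * (\<integral>\<^sup>+u. f (0 + Q * u) \<partial>lborel)"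
    by (rule nn_integral_real_affine[OF fm]) (use Q0 in simp)
  moreover have "(\<lambda>u. f (0 + Q * u)) = (\<lambda>u. indicator {0..<1} u * F u)"
  proof
    fix u
    have "(0 \<le> Q * u \<and> Q * u < Q) \<longleftrightarrow> (0 \<le> u \<and> u < 1)"
      using Q0 by (simp add: zero_le_mult_iff)
    then show "f (0 + Q * u) = indicator {0..<1} u * F u"
      unfolding f_def F_def QL[symmetric] by (simp add: indicator_def mult.commute)
  qed
  ultimately have "ennreal Q * (\<integral>\<^sup>+u. indicator {0..<1} u * F u \<partial>lborel) = ennreal (sum_list (map (\<lambda>(r,t). r * g t) L))"
    using Q0 by simp
  then have "(\<integral>\<^sup>+u. indicator {0..<1} u * F u \<partial>lborel) = ennreal (sum_list (map (\<lambda>(r,t). r * g t) L)) / ennreal Q"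
    using Q0 by (metis ennreal_eq_0_iff ennreal_neq_top mult.commute mult_divide_eq_ennreal not_less order_refl)
  also have "\<dots> = ennreal (sum_list (map (\<lambda>(r,t). r * g t) L) / Q)"
  proof -
    have "0 \<le> sum_list (map (\<lambda>(r,t). r * g t) L)"
    proof (intro sum_list_nonneg)
      fix x assume "x \<in> set (map (\<lambda>(r,t). r * g t) L)"
      then obtain r t where "(r,t) \<in> set L" "x = r * g t" by auto
      then show "0 \<le> x" using nnL g[of t] by force
    qed
    then show ?thesis using Q0 by (intro divide_ennreal) auto
  qed
  finally show ?thesis using e1 unfolding L_def Q_def by simp
qed

definition ff :: "nat \<Rightarrow> real \<Rightarrow> cstate \<Rightarrow> real" where
  "ff n lam s = (2 + lam/2) * real (fst s) + real (snd s) - lam / (2 * real n) * (real (fst s))^2"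

definition kap0 :: "real \<Rightarrow> real" where "kap0 lam = min (2 - lam/2) (1 - lam^2/16)"
definition kap :: "real \<Rightarrow> real" where "kap lam = kap0 lam / (1 + lam)"
definition LL :: "real \<Rightarrow> real" where "LL lam = 3 + 2*lam"
definition bb :: "real \<Rightarrow> real" where "bb lam = min (1 / LL lam) (kap lam / (2 * (LL lam)^2))"
definition dd :: "real \<Rightarrow> real" where "dd lam = kap lam / 2"

lemma exp_quad: fixes z :: real assumes "\<bar>z\<bar> \<le> 1" shows "exp z \<le> 1 + z + z^2"
proof (cases "0 \<le> z")
  case True then show ?thesis using exp_bound[of z] assms by auto
next
  case False
  define w where "w = -z"
  have w0: "0 \<le> w" using False w_def by simp
  have "1 + w + w^2/2 \<le> exp w" by (rule exp_lower_Taylor_quadratic[OF w0])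
  moreover have "exp z = 1 / exp w" by (simp add: w_def exp_minus field_simps)
  moreover have "1 \<le> (1 + w + w^2/2) * (1 - w + w^2)"
  proof -
    have "(1 + w + w^2/2) * (1 - w + w^2) = 1 + w^2/2 + w^3/2 + w^4/2"
      by (simp add: field_simps power2_eq_square power3_eq_cube power4_eq_xxxx)
    moreover have "0 \<le> w^2/2 + w^3/2 + w^4/2" using w0 by simp
    ultimately show ?thesis by linarith
  qed
  moreover have "0 < 1 + w + w^2/2" using w0 by (simp add: add_pos_nonneg)
  ultimately have "exp z \<le> 1 - w + w^2"
  proof -
    assume A: "1 + w + w^2/2 \<le> exp w" "exp z = 1 / exp w" "1 \<le> (1 + w + w^2/2) * (1 - w + w^2)" "0 < 1 + w + w^2/2"
    have "exp z \<le> 1 / (1 + w + w^2/2)" unfolding A(2) using A(1,4) by (intro divide_left_mono) auto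
    also have "\<dots> \<le> 1 - w + w^2" using A(3,4) by (simp add: pos_divide_le_eq mult.commute)
    finally show ?thesis .
  qed
  then show ?thesis by (simp add: w_def)
qed

lemma kap_facts:
  assumes "0 < lam" "lam < 4"
  shows "0 < kap0 lam" "kap0 lam \<le> 2 - lam/2" "kap0 lam \<le> 1 - lam^2/16" "0 < kap lam"
    "kap lam \<le> 1" "0 < LL lam" "0 < bb lam" "0 < dd lam" "dd lam \<le> 1"
proof -
  have "lam*lam < 4*4" using assms by (intro mult_strict_mono) auto
  then have "lam^2 < 16" by (simp add: power2_eq_square)
  then show k0: "0 < kap0 lam" using assms by (simp add: kap0_def)
  show "kap0 lam \<le> 2 - lam/2" "kap0 lam \<le> 1 - lam^2/16" by (simp_all add: kap0_def)
  show k: "0 < kap lam" using k0 assms by (simp add: kap_def)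
  have "1 - lam^2/16 \<le> 1 + lam" using assms by (smt (verit) zero_le_power2 divide_nonneg_pos)
  then have "kap0 lam \<le> 1 + lam" by (simp add: kap0_def min.coboundedI2)
  then show k1: "kap lam \<le> 1" using assms by (simp add: kap_def)
  show "0 < LL lam" using assms by (simp add: LL_def)
  then show "0 < bb lam" using k by (simp add: bb_def)
  show "0 < dd lam" "dd lam \<le> 1" using k k1 by (simp_all add: dd_def)
qed

lemma drift_main:
  fixes B G n :: nat and lam b :: real
  assumes lam: "0 < lam" "lam < 4" and n: "0 < n" and BG: "B + G \<le> n" and nz: "(B, G) \<noteq> (0, 0)"
    and b: "0 < b" "b \<le> bb lam"
  shows "sum_list (map (\<lambda>(r,t). r * exp (b * ff n lam t)) (csi_trans n lam (B, G)))
     \<le> csi_qtot n lam (B, G) * exp (b * ff n lam (B, G) - b * dd lam)"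
proof -
  define x where "x = real B"
  define y where "y = real G"
  define N where "N = real n"
  define a where "a = 2 + lam/2"
  define c where "c = lam / (2 * N)"
  define E0 where "E0 = exp (b * ff n lam (B, G))"
  define L where "L = LL lam"
  define D1 where "D1 = - a + c * (2*x - 1)"
  define D3 where "D3 = a - 1 - c * (2*x + 1)"
  define r3 where "r3 = lam / N * x * y"
  define r4 where "r4 = lam / N * x * (N - x - y)"
  define q where "q = csi_qtot n lam (B, G)"
  have x0: "0 \<le> x" and y0: "0 \<le> y" and N1: "1 \<le> N" and xyN: "x + y \<le> N"
    using n BG by (simp_all add: x_def y_def N_def)
  have xy: "0 < x + y" using nz by (auto simp: x_def y_def)
  have xN: "x \<le> N" using xyN y0 by simp
  have ffs: "ff n lam (B, G) = a * x + y - c * x^2"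
    by (simp add: ff_def a_def c_def x_def y_def N_def)
  have r3n: "0 \<le> r3" using lam x0 y0 N1 by (simp add: r3_def)
  have r4n: "0 \<le> r4" using lam x0 y0 N1 xyN by (simp add: r4_def)
  have qdef: "q = x + y + r3 + r4"
    by (simp add: q_def csi_qtot_def csi_trans_def x_def y_def N_def r3_def r4_def)
  have e1: "real B * exp (b * ff n lam (B - 1, G)) = x * E0 * exp (b * D1)"
  proof (cases "B = 0")
    case True then show ?thesis by (simp add: x_def)
  next
    case False
    then have "real (B - 1) = x - 1" by (simp add: x_def of_nat_diff)
    then have "ff n lam (B - 1, G) = a * (x - 1) + y - c * (x - 1)^2"
      by (simp add: ff_def a_def c_def y_def N_def)
    also have "\<dots> = ff n lam (B, G) + D1"
      by (simp add: ffs D1_def power2_eq_square algebra_simps)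
    finally have "ff n lam (B - 1, G) = ff n lam (B, G) + D1" .
    then show ?thesis by (simp add: E0_def x_def distrib_left exp_add)
  qed
  have e2: "real G * exp (b * ff n lam (B, G - 1)) = y * E0 * exp (b * (-1))"
  proof (cases "G = 0")
    case True then show ?thesis by (simp add: y_def)
  next
    case False
    then have "real (G - 1) = y - 1" by (simp add: y_def of_nat_diff)
    then have "ff n lam (B, G - 1) = ff n lam (B, G) + (-1)"
      by (simp add: ff_def y_def)
    then have "exp (b * ff n lam (B, G - 1)) = E0 * exp (b * (-1))"
      unfolding E0_def by (simp only: distrib_left exp_add)
    then show ?thesis by (simp add: y_def)
  qed
  have e3: "lam / real n * real B * real G * exp (b * ff n lam (B + 1, G - 1)) = r3 * E0 * exp (b * D3)"
  proof (cases "G = 0")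
    case True then show ?thesis by (simp add: y_def r3_def)
  next
    case False
    then have "real (G - 1) = y - 1" by (simp add: y_def of_nat_diff)
    then have "ff n lam (B + 1, G - 1) = a * (1 + x) + (y - 1) - c * (1 + x)^2"
      by (simp add: ff_def a_def c_def x_def N_def)
    also have "\<dots> = ff n lam (B, G) + D3"
      by (simp add: ffs D3_def power2_eq_square algebra_simps)
    finally have "ff n lam (B + 1, G - 1) = ff n lam (B, G) + D3" .
    then have "exp (b * ff n lam (B + 1, G - 1)) = E0 * exp (b * D3)"
      unfolding E0_def by (simp only: distrib_left exp_add)
    then show ?thesis by (simp add: r3_def x_def y_def N_def)
  qed
  have e4: "lam / real n * real B * (real n - real B - real G) * exp (b * ff n lam (B, G + 1)) = r4 * E0 * exp (b * 1)"
  proof -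
    have "ff n lam (B, G + 1) = ff n lam (B, G) + 1" by (simp add: ff_def)
    then have "exp (b * ff n lam (B, G + 1)) = E0 * exp (b * 1)"
      unfolding E0_def by (simp only: distrib_left exp_add)
    then show ?thesis by (simp add: r4_def x_def y_def N_def)
  qed
  have sum_eq: "sum_list (map (\<lambda>(r,t). r * exp (b * ff n lam t)) (csi_trans n lam (B, G)))
      = E0 * (x * exp (b * D1) + y * exp (b * (-1)) + r3 * exp (b * D3) + r4 * exp (b * 1))"
  proof -
    have "sum_list (map (\<lambda>(r,t). r * exp (b * ff n lam t)) (csi_trans n lam (B, G)))
       = real B * exp (b * ff n lam (B - 1, G)) + (real G * exp (b * ff n lam (B, G - 1))
         + (lam / real n * real B * real G * exp (b * ff n lam (B + 1, G - 1))
         + lam / real n * real B * (real n - real B - real G) * exp (b * ff n lam (B, G + 1))))"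
      by (simp add: csi_trans_def)
    also have "\<dots> = x * E0 * exp (b * D1) + (y * E0 * exp (b * (-1)) + (r3 * E0 * exp (b * D3) + r4 * E0 * exp (b * 1)))"
      unfolding e1 e2 e3 e4 ..
    also have "\<dots> = E0 * (x * exp (b * D1) + y * exp (b * (-1)) + r3 * exp (b * D3) + r4 * exp (b * 1))"
      by (simp only: distrib_left mult.commute mult.left_commute add.assoc)
    finally show ?thesis .
  qed
  have cN: "c * (2 * x + 1) \<le> 3/2 * lam" and c0: "0 \<le> c" and c2: "c * (2*x) \<le> lam" and c1: "c \<le> lam/2"
  proof -
    show c0: "0 \<le> c" using lam N1 by (simp add: c_def)
    have "c * (2 * x) = lam * (x / N)" using N1 by (simp add: c_def field_simps)
    also have "\<dots> \<le> lam * 1" using lam xN N1 by (intro mult_left_mono) (auto simp: divide_le_eq)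
    finally show c2: "c * (2*x) \<le> lam" by simp
    have "c = lam / 2 / N" by (simp add: c_def)
    also have "\<dots> \<le> lam / 2 / 1" using lam N1 by (intro divide_left_mono) auto
    finally show c1: "c \<le> lam/2" by simp
    show "c * (2 * x + 1) \<le> 3/2 * lam" using c1 c2 by (simp add: algebra_simps)
  qed
  have c2x: "0 \<le> c * (2 * x)" using c0 x0 by simp
  have LD1: "\<bar>D1\<bar> \<le> L"
  proof -
    have "D1 = -2 - lam/2 + c * (2 * x) - c" by (simp add: D1_def a_def algebra_simps)
    then show ?thesis using c2x c2 c0 c1 lam unfolding L_def LL_def abs_le_iff by linarith
  qed
  have LD3: "\<bar>D3\<bar> \<le> L"
  proof -
    have "D3 = 1 + lam/2 - c * (2 * x) - c" by (simp add: D3_def a_def algebra_simps)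
    then show ?thesis using c2x c2 c0 c1 lam unfolding L_def LL_def abs_le_iff by linarith
  qed
  have L1: "1 \<le> L" using lam by (simp add: L_def LL_def)
  have bL: "b * L \<le> 1"
  proof -
    have "b \<le> 1 / L" using b by (simp add: bb_def L_def)
    then show ?thesis using L1 by (simp add: le_divide_eq)
  qed
  have bL2: "b * L^2 \<le> kap lam / 2"
  proof -
    have "b \<le> kap lam / (2 * L^2)" using b by (simp add: bb_def L_def)
    then show ?thesis using L1 by (simp add: le_divide_eq)
  qed
  have bnd: "\<And>r D. 0 \<le> r \<Longrightarrow> \<bar>D\<bar> \<le> L \<Longrightarrow> r * exp (b * D) \<le> r * (1 + b * D + b^2 * L^2)"
  proof -
    fix r D :: real assume r: "0 \<le> r" and D: "\<bar>D\<bar> \<le> L"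
    have bD: "\<bar>b * D\<bar> \<le> 1"
    proof -
      have "\<bar>b * D\<bar> = b * \<bar>D\<bar>" using b by (simp add: abs_mult)
      also have "\<dots> \<le> b * L" using b D by (intro mult_left_mono) auto
      finally show ?thesis using bL by simp
    qed
    have "(b * D)^2 \<le> b^2 * L^2"
    proof -
      have "D^2 \<le> L^2" using D by (metis abs_le_square_iff abs_of_nonneg L1 order.trans zero_le_one)
      then show ?thesis by (simp add: power_mult_distrib mult_left_mono)
    qed
    then have "exp (b * D) \<le> 1 + b * D + b^2 * L^2" using exp_quad[OF bD] by linarith
    then show "r * exp (b * D) \<le> r * (1 + b * D + b^2 * L^2)" by (rule mult_left_mono[OF _ r])
  qed
  have absL1: "\<bar>-1\<bar> \<le> L" "\<bar>1\<bar> \<le> L" using L1 by auto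
  have S1: "x * exp (b * D1) + y * exp (b * (-1)) + r3 * exp (b * D3) + r4 * exp (b * 1)
     \<le> x * (1 + b * D1 + b^2 * L^2) + y * (1 + b * (-1) + b^2 * L^2) + r3 * (1 + b * D3 + b^2 * L^2) + r4 * (1 + b * 1 + b^2 * L^2)"
    using bnd[OF x0 LD1] bnd[OF y0 absL1(1)] bnd[OF r3n LD3] bnd[OF r4n absL1(2)] by linarith
  have drift_id: "x * D1 + y * (-1) + r3 * D3 + r4 * 1 = -(2 - lam/2) * x - c * x - y + lam^2 * x * y * (N - 2*x - 1) / (2 * N^2)"
    using N1 by (simp add: D1_def D3_def r3_def r4_def a_def c_def field_simps power2_eq_square)
  have quad: "8 * x * (N - 2*x - 1) \<le> N^2"
  proof -
    have "0 \<le> (N - 4*x)^2" by simp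
    then have "8 * x * (N - 2*x) \<le> N^2" by (simp add: power2_eq_square algebra_simps)
    moreover have "8 * x * (N - 2*x - 1) = 8 * x * (N - 2*x) - 8 * x" by (simp add: algebra_simps)
    ultimately show ?thesis using x0 by linarith
  qed
  have "lam^2 * x * y * (N - 2*x - 1) / (2 * N^2) \<le> lam^2 / 16 * y"
  proof -
    have "lam^2 * x * y * (N - 2*x - 1) / (2 * N^2) = (lam^2 * y / (16 * N^2)) * (8 * x * (N - 2*x - 1))"
      using N1 by (simp add: field_simps)
    also have "\<dots> \<le> (lam^2 * y / (16 * N^2)) * N^2"
      using quad y0 by (intro mult_left_mono) auto
    also have "\<dots> = lam^2 / 16 * y" using N1 by (simp add: field_simps)
    finally show ?thesis .
  qed
  then have f4: "lam^2 * x * y * (N - 2*x - 1) / (2 * N^2) \<le> lam^2 / 16 * y" .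
  have f1: "kap0 lam * x \<le> 2 * x - lam / 2 * x"
    using mult_right_mono[OF kap_facts(2)[OF lam] x0] by (simp add: left_diff_distrib)
  have f2: "kap0 lam * y \<le> y - lam^2 / 16 * y"
    using mult_right_mono[OF kap_facts(3)[OF lam] y0] by (simp add: left_diff_distrib)
  have f3: "x * D1 + y * (-1) + r3 * D3 + r4 * 1 = - (2 * x) + lam / 2 * x - c * x - y + lam^2 * x * y * (N - 2*x - 1) / (2 * N^2)"
    using drift_id by (simp add: left_diff_distrib)
  have f5: "0 \<le> c * x" using c0 x0 by simp
  have drift_le: "x * D1 + y * (-1) + r3 * D3 + r4 * 1 \<le> - kap0 lam * (x + y)"
  proof -
    have "- kap0 lam * (x + y) = -(kap0 lam * x) - kap0 lam * y" by (simp add: algebra_simps)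
    then show ?thesis using f1 f2 f3 f4 f5 by linarith
  qed
  have qle: "q \<le> (1 + lam) * (x + y)"
  proof -
    have "r3 + r4 = lam / N * x * (N - x)" by (simp add: r3_def r4_def right_diff_distrib)
    also have "\<dots> \<le> lam / N * x * N" using lam N1 x0 by (intro mult_left_mono) auto
    also have "\<dots> = lam * x" using N1 by simp
    finally have "r3 + r4 \<le> lam * x" .
    moreover have "0 \<le> lam * y" using lam y0 by simp
    moreover have "(1 + lam) * (x + y) = x + y + lam * x + lam * y" by (simp add: algebra_simps)
    ultimately show ?thesis using qdef by linarith
  qed
  have kq: "- kap0 lam * (x + y) \<le> - kap lam * q"
  proof -
    have "kap lam * q \<le> kap lam * ((1 + lam) * (x + y))"
      using qle kap_facts(4)[OF lam] by (intro mult_left_mono) auto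
    also have "\<dots> = kap0 lam * (x + y)" using lam by (simp add: kap_def)
    finally show ?thesis by simp
  qed
  have q0: "0 \<le> q" using qdef x0 y0 r3n r4n by simp
  have "x * (1 + b * D1 + b^2 * L^2) + y * (1 + b * (-1) + b^2 * L^2) + r3 * (1 + b * D3 + b^2 * L^2) + r4 * (1 + b * 1 + b^2 * L^2)
     = q + b * (x * D1 + y * (-1) + r3 * D3 + r4 * 1) + b^2 * L^2 * q"
    by (simp add: qdef algebra_simps)
  also have "\<dots> \<le> q + b * (- kap lam * q) + b * (kap lam / 2) * q"
  proof -
    have "b * (x * D1 + y * (-1) + r3 * D3 + r4 * 1) \<le> b * (- kap lam * q)"
      using drift_le kq b by (intro mult_left_mono) auto
    moreover have "b^2 * L^2 * q \<le> b * (kap lam / 2) * q"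
    proof -
      have "b^2 * L^2 = b * (b * L^2)" by (simp add: power2_eq_square)
      also have "\<dots> \<le> b * (kap lam / 2)" using bL2 b by (intro mult_left_mono) auto
      finally show ?thesis using q0 by (intro mult_right_mono) auto
    qed
    ultimately show ?thesis by linarith
  qed
  also have "\<dots> = q * (1 + (- b * dd lam))" by (simp add: dd_def algebra_simps)
  also have "\<dots> \<le> q * exp (- b * dd lam)" using q0 by (intro mult_left_mono exp_ge_add_one_self) auto
  finally have S2: "x * exp (b * D1) + y * exp (b * (-1)) + r3 * exp (b * D3) + r4 * exp (b * 1) \<le> q * exp (- b * dd lam)"
    using S1 by linarith
  have "sum_list (map (\<lambda>(r,t). r * exp (b * ff n lam t)) (csi_trans n lam (B, G))) \<le> E0 * (q * exp (- b * dd lam))"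
    unfolding sum_eq by (rule mult_left_mono[OF S2]) (simp add: E0_def)
  also have "\<dots> = q * exp (b * ff n lam (B, G) - b * dd lam)"
    by (simp add: E0_def exp_diff exp_minus field_simps)
  finally show ?thesis by (simp add: q_def)
qed

lemma trans_nonneg:
  assumes "0 < lam" "fst s + snd s \<le> n"
  shows "\<forall>p\<in>set (csi_trans n lam s). 0 \<le> fst p"
proof -
  obtain B G where s: "s = (B, G)" by (cases s)
  have "real B + real G \<le> real n" using assms s by (simp add: of_nat_add[symmetric] del: of_nat_add)
  then show ?thesis using assms s by (auto simp: csi_trans_def)
qed

lemma qtot_ge:
  assumes "0 < lam" "fst s + snd s \<le> n"
  shows "real (fst s + snd s) \<le> csi_qtot n lam s"
proof -
  obtain B G where s: "s = (B, G)" by (cases s)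
  have "real B + real G \<le> real n" using assms s by (simp add: of_nat_add[symmetric] del: of_nat_add)
  then have "0 \<le> lam / real n * real B * real G" "0 \<le> lam / real n * real B * (real n - real B - real G)"
    using assms by auto
  then show ?thesis using s by (simp add: csi_qtot_def csi_trans_def)
qed

lemma step_zero: "csi_step n lam (0, 0) u = (0, 0)"
  by (simp add: csi_step_def csi_qtot_def csi_trans_def)

lemma step_inv:
  assumes "0 < lam" "fst s + snd s \<le> n"
  shows "fst (csi_step n lam s u) + snd (csi_step n lam s u) \<le> n"
proof -
  obtain B G where s: "s = (B, G)" by (cases s)
  define q where "q = csi_qtot n lam s"
  define v where "v = u * q"
  define r3 where "r3 = lam / real n * real B * real G"
  define r4 where "r4 = lam / real n * real B * (real n - real B - real G)"
  have BG: "B + G \<le> n" using assms s by simp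
  have st: "csi_step n lam s u = (if q = 0 then s else
      (if v < real B then (B - 1, G) else if v - real B < real G then (B, G - 1)
       else if v - real B - real G < r3 then (B + 1, G - 1)
       else if v - real B - real G - r3 < r4 then (B, G + 1) else s))"
    by (simp add: csi_step_def s q_def v_def r3_def r4_def csi_trans_def)
  show ?thesis
  proof (cases "q = 0")
    case True then show ?thesis using st assms by simp
  next
    case False
    note F = False
    show ?thesis
    proof (cases "v < real B")
      case True then show ?thesis using st F BG by simp
    next
      case nB: False
      show ?thesis
      proof (cases "v - real B < real G")
        case True then show ?thesis using st F nB BG by simp
      next
        case nG: False
        show ?thesis
        proof (cases "v - real B - real G < r3")
          case True
          then have "0 < r3" using nB nG by linarith
          then have "G > 0" unfolding r3_def by (cases "G = 0") auto
          then show ?thesis using st F nB nG True BG by simp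
        next
          case n3: False
          show ?thesis
          proof (cases "v - real B - real G - r3 < r4")
            case True
            then have "0 < r4" using nB nG n3 by linarith
            have "0 < real n - real B - real G"
            proof (rule ccontr)
              assume "\<not> 0 < real n - real B - real G"
              moreover have "0 \<le> lam / real n * real B" using assms by simp
              ultimately have "lam / real n * real B * (real n - real B - real G) \<le> 0"
                by (intro mult_nonneg_nonpos) auto
              then have "r4 \<le> 0" unfolding r4_def .
              then show False using \<open>0 < r4\<close> by simp
            qed
            then have "B + G < n" by linarith
            then show ?thesis using st F nB nG n3 True by simp
          next
            case False then show ?thesis using st F nB nG n3 BG s by simp
          qed
        qed
      qed
    qed
  qed
qed

lemma step_meas: "csi_step n lam s \<in> measurable borel (count_space UNIV)"
proof -
  have "(\<lambda>u. csi_select (u * csi_qtot n lam s) (csi_trans n lam s) s) \<in> measurable borel (count_space UNIV)"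
    by (rule measurable_compose[OF _ select_meas]) simp
  then show ?thesis unfolding csi_step_def[abs_def] by (cases "csi_qtot n lam s = 0") simp_all
qed

lemma step_meas_nu: "(\<lambda>w. csi_step n lam s (snd w)) \<in> measurable nu (count_space UNIV)"
proof -
  have "snd \<in> measurable nu borel"
    unfolding nu_def by (rule measurable_snd'') simp
  then show ?thesis by (rule measurable_compose) (rule step_meas)
qed

lemma drift_int:
  fixes K :: real
  assumes lam: "0 < lam" "lam < 4" and n: "0 < n" and BG: "fst s + snd s \<le> n" and nz: "s \<noteq> (0, 0)"
    and b: "0 < b" "b \<le> bb lam"
  shows "(\<integral>\<^sup>+w. ennreal (exp (b * ff n lam (csi_step n lam s (snd w)) + K)) \<partial>nu)
      \<le> ennreal (exp (b * ff n lam s + K - b * dd lam))"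
proof -
  obtain B G where s: "s = (B, G)" by (cases s)
  define q where "q = csi_qtot n lam s"
  have q0: "0 < q"
  proof -
    have "real (fst s + snd s) \<le> q" unfolding q_def by (rule qtot_ge[OF lam(1) BG])
    moreover have "0 < fst s + snd s" using nz s by auto
    ultimately show ?thesis by linarith
  qed
  have eq: "(\<integral>\<^sup>+w. ennreal (exp (b * ff n lam (csi_step n lam s (snd w)) + K)) \<partial>nu)
     = ennreal (sum_list (map (\<lambda>(r,t). r * exp (b * ff n lam t + K)) (csi_trans n lam s)) / q)"
    unfolding q_def by (rule step_integral[OF _ trans_nonneg[OF lam(1) BG]]) (use q0 q_def in auto)
  have "sum_list (map (\<lambda>(r,t). r * exp (b * ff n lam t + K)) (csi_trans n lam s))
      = exp K * sum_list (map (\<lambda>(r,t). r * exp (b * ff n lam t)) (csi_trans n lam s))"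
    by (simp add: csi_trans_def s exp_add algebra_simps)
  also have "\<dots> \<le> exp K * (q * exp (b * ff n lam s - b * dd lam))"
    using drift_main[OF lam n, of B G b] BG nz b s by (intro mult_left_mono) (auto simp: q_def)
  finally have "sum_list (map (\<lambda>(r,t). r * exp (b * ff n lam t + K)) (csi_trans n lam s)) / q
      \<le> exp K * (q * exp (b * ff n lam s - b * dd lam)) / q"
    using q0 by (intro divide_right_mono) auto
  also have "\<dots> = exp (b * ff n lam s + K - b * dd lam)"
    using q0 by (simp add: exp_add exp_diff)
  finally show ?thesis unfolding eq by (rule ennreal_leI)
qed

declare chainF.simps(2)[simp del]

lemma ff_bounds:
  assumes lam: "0 < lam" "lam < 4" and n: "0 < n" and BG: "fst s + snd s \<le> n"
  shows "real (fst s + snd s) \<le> ff n lam s" "ff n lam s \<le> 4 * real (fst s + snd s)"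
proof -
  obtain B G where s: "s = (B, G)" by (cases s)
  define x where "x = real B"
  have x0: "0 \<le> x" by (simp add: x_def)
  have xN: "x \<le> real n" using BG s by (simp add: x_def)
  have c: "lam / (2 * real n) * x^2 \<le> lam / 2 * x"
  proof -
    have "lam / (2 * real n) * x^2 = (lam / 2 * x) * (x / real n)" using n by (simp add: power2_eq_square field_simps)
    also have "\<dots> \<le> (lam / 2 * x) * 1" using lam x0 xN n by (intro mult_left_mono) (auto simp: divide_le_eq)
    finally show ?thesis by simp
  qed
  have c0: "0 \<le> lam / (2 * real n) * x^2" using lam by simp
  have ffe: "ff n lam s = (2 + lam/2) * x + real G - lam / (2 * real n) * x^2" by (simp add: ff_def s x_def)
  have d: "(2 + lam/2) * x = 2 * x + lam / 2 * x" by (simp add: distrib_right)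
  have e: "real (fst s + snd s) = x + real G" by (simp add: s x_def)
  show "real (fst s + snd s) \<le> ff n lam s" using c x0 d e unfolding ffe by linarith
  have "(2 + lam/2) * x \<le> 4 * x" using lam x0 by (intro mult_right_mono) auto
  then show "ff n lam s \<le> 4 * real (fst s + snd s)" using c0 e x0 unfolding ffe by (simp only: distrib_left)
qed

lemma ff_init: "0 < n \<Longrightarrow> ff n lam (n, 0) = 2 * real n"
  by (simp add: ff_def power2_eq_square field_simps)

definition stA :: "nat \<Rightarrow> real \<Rightarrow> cstate \<times> nat \<Rightarrow> real \<times> real \<Rightarrow> cstate \<times> nat" where
  "stA n lam y w = (csi_step n lam (fst y) (snd w), Suc (snd y))"
definition phiA :: "nat \<Rightarrow> real \<Rightarrow> real \<Rightarrow> cstate \<times> nat \<Rightarrow> ennreal" where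
  "phiA n lam b y = (if fst y = (0, 0) then 0 else ennreal (exp (b * ff n lam (fst y) + b * dd lam * real (snd y))))"

lemma chainA_eq: "chainF (stA n lam) (s0, 0) \<omega> k = (csi_jump n lam s0 \<omega> k, k)"
  by (induction k) (auto simp: chainF_Suc' stA_def)

lemma villeA:
  assumes lam: "0 < lam" "lam < 4" and n: "0 < n" and b: "0 < b" "b \<le> bb lam"
  shows "{\<omega>\<in>space csi_space. \<exists>k. a \<le> phiA n lam b (chainF (stA n lam) ((n, 0), 0) \<omega> k)} \<in> sets csi_space"
    "a * emeasure csi_space {\<omega>\<in>space csi_space. \<exists>k. a \<le> phiA n lam b (chainF (stA n lam) ((n, 0), 0) \<omega> k)}
       \<le> ennreal (exp (2 * b * real n))"
proof -
  define Sp where "Sp = {y::cstate \<times> nat. fst (fst y) + snd (fst y) \<le> n}"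
  have inv: "\<And>y w. y \<in> Sp \<Longrightarrow> stA n lam y w \<in> Sp"
    unfolding Sp_def stA_def using step_inv[OF lam(1)] by auto
  have stm: "\<And>y. stA n lam y \<in> measurable nu (count_space UNIV)"
  proof -
    fix y :: "cstate \<times> nat"
    have "(\<lambda>w. csi_step n lam (fst y) (snd w)) \<in> measurable nu (count_space UNIV)" by (rule step_meas_nu)
    then show "stA n lam y \<in> measurable nu (count_space UNIV)"
      unfolding stA_def[abs_def] by (rule measurable_compose[of _ _ "count_space UNIV"]) simp
  qed
  have drift: "\<And>y. y \<in> Sp \<Longrightarrow> (\<integral>\<^sup>+w. phiA n lam b (stA n lam y w) \<partial>nu) \<le> phiA n lam b y"
  proof -
    fix y :: "cstate \<times> nat" assume y: "y \<in> Sp"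
    obtain s k where yy: "y = (s, k)" by (cases y)
    show "(\<integral>\<^sup>+w. phiA n lam b (stA n lam y w) \<partial>nu) \<le> phiA n lam b y"
    proof (cases "s = (0, 0)")
      case True then show ?thesis by (simp add: yy stA_def phiA_def step_zero)
    next
      case False
      have "(\<integral>\<^sup>+w. phiA n lam b (stA n lam y w) \<partial>nu)
          \<le> (\<integral>\<^sup>+w. ennreal (exp (b * ff n lam (csi_step n lam s (snd w)) + b * dd lam * real (Suc k))) \<partial>nu)"
        by (intro nn_integral_mono) (simp add: yy stA_def phiA_def)
      also have "\<dots> \<le> ennreal (exp (b * ff n lam s + b * dd lam * real (Suc k) - b * dd lam))"
        by (rule drift_int[OF lam n _ False b]) (use y yy Sp_def in simp)
      also have "\<dots> = phiA n lam b y"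
        using False by (simp add: yy phiA_def algebra_simps)
      finally show ?thesis .
    qed
  qed
  have y0: "((n, 0), 0) \<in> Sp" unfolding Sp_def by simp
  show "{\<omega>\<in>space csi_space. \<exists>k. a \<le> phiA n lam b (chainF (stA n lam) ((n, 0), 0) \<omega> k)} \<in> sets csi_space"
    by (rule ville(1)[OF inv stm drift y0])
  have "a * emeasure csi_space {\<omega>\<in>space csi_space. \<exists>k. a \<le> phiA n lam b (chainF (stA n lam) ((n, 0), 0) \<omega> k)}
       \<le> phiA n lam b ((n, 0), 0)"
    by (rule ville(2)[OF inv stm drift y0])
  also have "\<dots> = ennreal (exp (2 * b * real n))"
    using n by (simp add: phiA_def ff_init)
  finally show "a * emeasure csi_space {\<omega>\<in>space csi_space. \<exists>k. a \<le> phiA n lam b (chainF (stA n lam) ((n, 0), 0) \<omega> k)}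
       \<le> ennreal (exp (2 * b * real n))" .
qed

definition stU :: "nat \<Rightarrow> real \<Rightarrow> real \<Rightarrow> cstate \<times> bool \<Rightarrow> real \<times> real \<Rightarrow> cstate \<times> bool" where
  "stU n lam e y w = (csi_step n lam (fst y) (snd w),
      snd y \<or> real (fst (csi_step n lam (fst y) (snd w)) + snd (csi_step n lam (fst y) (snd w))) < e)"
definition phiU :: "nat \<Rightarrow> real \<Rightarrow> real \<Rightarrow> real \<Rightarrow> cstate \<times> bool \<Rightarrow> ennreal" where
  "phiU n lam b h y = (if snd y then ennreal (exp (b * ff n lam (fst y) - b * h)) else 1)"

lemma chainU_eq:
  assumes "\<not> real (fst s0 + snd s0) < e"
  shows "chainF (stU n lam e) (s0, False) \<omega> k = (csi_jump n lam s0 \<omega> k,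
     \<exists>i\<le>k. real (fst (csi_jump n lam s0 \<omega> i) + snd (csi_jump n lam s0 \<omega> i)) < e)"
proof (induction k)
  case 0 then show ?case using assms by simp
next
  case (Suc k)
  then show ?case by (auto simp: chainF_Suc' stU_def le_Suc_eq)
qed

lemma villeU:
  assumes lam: "0 < lam" "lam < 4" and n: "0 < n" and b: "0 < b" "b \<le> bb lam" and eh: "4 * e \<le> h"
  shows "{\<omega>\<in>space csi_space. \<exists>k. a \<le> phiU n lam b h (chainF (stU n lam e) ((n, 0), False) \<omega> k)} \<in> sets csi_space"
    "a * emeasure csi_space {\<omega>\<in>space csi_space. \<exists>k. a \<le> phiU n lam b h (chainF (stU n lam e) ((n, 0), False) \<omega> k)}
       \<le> 1"
proof -
  define Sp where "Sp = {y::cstate \<times> bool. fst (fst y) + snd (fst y) \<le> n}"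
  have inv: "\<And>y w. y \<in> Sp \<Longrightarrow> stU n lam e y w \<in> Sp"
    unfolding Sp_def stU_def using step_inv[OF lam(1)] by auto
  have stm: "\<And>y. stU n lam e y \<in> measurable nu (count_space UNIV)"
  proof -
    fix y :: "cstate \<times> bool"
    have "(\<lambda>w. csi_step n lam (fst y) (snd w)) \<in> measurable nu (count_space UNIV)" by (rule step_meas_nu)
    then show "stU n lam e y \<in> measurable nu (count_space UNIV)"
      unfolding stU_def[abs_def] by (rule measurable_compose[of _ _ "count_space UNIV"]) simp
  qed
  interpret nuP: prob_space nu by (rule prob_nu)
  have drift: "\<And>y. y \<in> Sp \<Longrightarrow> (\<integral>\<^sup>+w. phiU n lam b h (stU n lam e y w) \<partial>nu) \<le> phiU n lam b h y"
  proof -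
    fix y :: "cstate \<times> bool" assume y: "y \<in> Sp"
    obtain s fl where yy: "y = (s, fl)" by (cases y)
    have sS: "fst s + snd s \<le> n" using y yy Sp_def by simp
    show "(\<integral>\<^sup>+w. phiU n lam b h (stU n lam e y w) \<partial>nu) \<le> phiU n lam b h y"
    proof (cases fl)
      case False
      have "(\<integral>\<^sup>+w. phiU n lam b h (stU n lam e y w) \<partial>nu) \<le> (\<integral>\<^sup>+w. 1 \<partial>nu)"
      proof (intro nn_integral_mono)
        fix w :: "real \<times> real"
        define s' where "s' = csi_step n lam s (snd w)"
        have s'S: "fst s' + snd s' \<le> n" unfolding s'_def by (rule step_inv[OF lam(1) sS])
        show "phiU n lam b h (stU n lam e y w) \<le> 1"
        proof (cases "real (fst s' + snd s') < e")
          case True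
          have "ff n lam s' \<le> 4 * real (fst s' + snd s')" by (rule ff_bounds(2)[OF lam n s'S])
          also have "\<dots> \<le> h" using True eh by simp
          finally have "b * ff n lam s' - b * h \<le> 0" using b by (simp add: mult_left_mono right_diff_distrib[symmetric] mult_nonneg_nonpos)
          then show ?thesis using False True by (simp add: yy stU_def phiU_def s'_def[symmetric])
        next
          case nT: False then show ?thesis using False by (simp add: yy stU_def phiU_def s'_def[symmetric])
        qed
      qed
      also have "\<dots> = 1" by (simp add: nuP.emeasure_space_1)
      finally show ?thesis using False by (simp add: yy phiU_def)
    next
      case True
      show ?thesis
      proof (cases "s = (0, 0)")
        case s0: True
        then show ?thesis using True by (simp add: yy stU_def phiU_def step_zero nuP.emeasure_space_1)
      next
        case s0: False
        have "(\<integral>\<^sup>+w. phiU n lam b h (stU n lam e y w) \<partial>nu)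
            = (\<integral>\<^sup>+w. ennreal (exp (b * ff n lam (csi_step n lam s (snd w)) + (- b * h))) \<partial>nu)"
          using True by (intro nn_integral_cong) (simp add: yy stU_def phiU_def)
        also have "\<dots> \<le> ennreal (exp (b * ff n lam s + (- b * h) - b * dd lam))"
          by (rule drift_int[OF lam n sS s0 b])
        also have "\<dots> \<le> ennreal (exp (b * ff n lam s - b * h))"
          using b kap_facts(8)[OF lam] by (intro ennreal_leI) simp
        also have "\<dots> = phiU n lam b h y" using True by (simp add: yy phiU_def)
        finally show ?thesis .
      qed
    qed
  qed
  have y0: "((n, 0), False) \<in> Sp" unfolding Sp_def by simp
  show "{\<omega>\<in>space csi_space. \<exists>k. a \<le> phiU n lam b h (chainF (stU n lam e) ((n, 0), False) \<omega> k)} \<in> sets csi_space"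
    by (rule ville(1)[OF inv stm drift y0])
  have "a * emeasure csi_space {\<omega>\<in>space csi_space. \<exists>k. a \<le> phiU n lam b h (chainF (stU n lam e) ((n, 0), False) \<omega> k)}
       \<le> phiU n lam b h ((n, 0), False)"
    by (rule ville(2)[OF inv stm drift y0])
  then show "a * emeasure csi_space {\<omega>\<in>space csi_space. \<exists>k. a \<le> phiU n lam b h (chainF (stU n lam e) ((n, 0), False) \<omega> k)}
       \<le> 1" by (simp add: phiU_def)
qed

lemma expmom: "(\<integral>\<^sup>+w. ennreal (exp (\<bar>fst w\<bar> / 2)) \<partial>nu) = 2"
proof -
  have m: "(\<lambda>x::real. ennreal (exp (\<bar>x\<bar> / 2))) \<in> borel_measurable borel" by measurable
  have "(\<integral>\<^sup>+w. ennreal (exp (\<bar>fst w\<bar> / 2)) \<partial>nu)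
      = (\<integral>\<^sup>+x. ennreal (exp (\<bar>x\<bar> / 2)) \<partial>density lborel (exponential_density 1))"
    by (rule nu_fst[OF m])
  also have "\<dots> = (\<integral>\<^sup>+x. ennreal (exponential_density 1 x) * ennreal (exp (\<bar>x\<bar> / 2)) \<partial>lborel)"
    by (subst nn_integral_density) auto
  also have "\<dots> = (\<integral>\<^sup>+x. ennreal (exp (- ((1/2) * x))) * indicator {0..} x \<partial>lborel)"
  proof (intro nn_integral_cong)
    fix x :: real
    show "ennreal (exponential_density 1 x) * ennreal (exp (\<bar>x\<bar> / 2)) = ennreal (exp (- ((1/2) * x))) * indicator {0..} x"
    proof (cases "x < 0")
      case True then show ?thesis by (simp add: exponential_density_def)
    next
      case False
      then have "exp (- x) * exp (x / 2) = exp (- ((1/2) * x))" by (simp add: exp_add[symmetric])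
      then show ?thesis using False by (simp add: exponential_density_def ennreal_mult[symmetric])
    qed
  qed
  also have "\<dots> = ennreal (0 - (-2 * exp (- ((1/2) * 0))))"
  proof (rule nn_integral_FTC_atLeast)
    show "(\<lambda>x::real. exp (- ((1/2) * x))) \<in> borel_measurable borel" by measurable
    show "\<And>x. 0 \<le> x \<Longrightarrow> ((\<lambda>x. -2 * exp (- ((1/2) * x))) has_real_derivative exp (- ((1/2) * x))) (at x)"
      by (auto intro!: derivative_eq_intros)
    show "\<And>x::real. 0 \<le> x \<Longrightarrow> 0 \<le> exp (- ((1/2) * x))" by simp
    have 1: "LIM x at_top. (1/2::real) * x :> at_top"
      by (rule filterlim_tendsto_pos_mult_at_top[OF tendsto_const]) (auto intro: filterlim_ident)
    have 2: "LIM x at_top. -((1/2::real) * x) :> at_bot" using 1 by (simp add: filterlim_uminus_at_bot)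
    have 3: "((\<lambda>x. exp (-((1/2::real) * x))) \<longlongrightarrow> 0) at_top" by (rule filterlim_compose[OF exp_at_bot 2])
    show "((\<lambda>x::real. -2 * exp (- ((1/2) * x))) \<longlongrightarrow> 0) at_top"
      using tendsto_mult[OF tendsto_const 3, of "-2"] by simp
  qed
  also have "\<dots> = 2" by simp
  finally show ?thesis by simp
qed

definition stT :: "real \<times> nat \<Rightarrow> real \<times> real \<Rightarrow> real \<times> nat" where
  "stT y w = (fst y + \<bar>fst w\<bar>, Suc (snd y))"
definition phiT :: "real \<times> nat \<Rightarrow> ennreal" where
  "phiT y = ennreal (exp (fst y / 2) / 2 ^ snd y)"

lemma chainT_eq: "chainF stT (x, j) \<omega> k = (x + (\<Sum>i<k. \<bar>fst (\<omega> i)\<bar>), j + k)"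
  by (induction k) (auto simp: chainF_Suc' stT_def)

lemma markovT:
  "ennreal (exp (c / 2) / 2 ^ m) * emeasure csi_space {\<omega>\<in>space csi_space. c \<le> (\<Sum>i<m. \<bar>fst (\<omega> i)\<bar>)} \<le> 1"
    "{\<omega>\<in>space csi_space. c \<le> (\<Sum>i<m. \<bar>fst (\<omega> i)\<bar>)} \<in> sets csi_space"
proof -
  have cm: "(\<lambda>\<omega>::nat\<Rightarrow>real\<times>real. \<omega> i) \<in> measurable csi_space nu" for i
    unfolding csi_space_eq by (rule measurable_component_singleton) simp
  have fm: "(\<lambda>w::real\<times>real. fst w) \<in> borel_measurable nu"
    unfolding nu_def by (rule measurable_fst'') simp
  have sm: "(\<lambda>\<omega>. \<Sum>i<k. \<bar>fst (\<omega> i)\<bar>) \<in> borel_measurable csi_space" for k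
    by (intro borel_measurable_sum borel_measurable_abs measurable_compose[OF cm fm])
  show sets: "{\<omega>\<in>space csi_space. c \<le> (\<Sum>i<m. \<bar>fst (\<omega> i)\<bar>)} \<in> sets csi_space"
    using sm[of m] by measurable
  have meas: "\<And>y k. y \<in> UNIV \<Longrightarrow> (\<lambda>\<omega>. phiT (chainF stT y \<omega> k)) \<in> borel_measurable csi_space"
  proof -
    fix y :: "real \<times> nat" and k
    obtain x j where y: "y = (x, j)" by (cases y)
    show "(\<lambda>\<omega>. phiT (chainF stT y \<omega> k)) \<in> borel_measurable csi_space"
      unfolding y chainT_eq phiT_def using sm[of k] by measurable
  qed
  interpret nuP: prob_space nu by (rule prob_nu)
  have drift: "\<And>y. y \<in> UNIV \<Longrightarrow> (\<integral>\<^sup>+w. phiT (stT y w) \<partial>nu) \<le> phiT y"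
  proof -
    fix y :: "real \<times> nat"
    obtain x j where y: "y = (x, j)" by (cases y)
    have "(\<integral>\<^sup>+w. phiT (stT y w) \<partial>nu) = (\<integral>\<^sup>+w. ennreal (exp (x / 2) / 2 ^ Suc j) * ennreal (exp (\<bar>fst w\<bar> / 2)) \<partial>nu)"
      by (intro nn_integral_cong) (simp add: y stT_def phiT_def ennreal_mult[symmetric] add_divide_distrib exp_add)
    also have "\<dots> = ennreal (exp (x / 2) / 2 ^ Suc j) * 2"
    proof -
      have em: "(\<lambda>w. ennreal (exp (\<bar>fst w\<bar> / 2))) \<in> borel_measurable nu"
        by (rule measurable_compose[OF fm, where g="\<lambda>x. ennreal (exp (\<bar>x\<bar> / 2))"]) measurable
      show ?thesis by (subst nn_integral_cmult[OF em]) (simp add: expmom)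
    qed
    also have "\<dots> = phiT y"
    proof -
      have "ennreal (exp (x / 2) / 2 ^ Suc j) * 2 = ennreal (exp (x / 2) / 2 ^ Suc j * 2)"
        using ennreal_mult[of "exp (x / 2) / 2 ^ Suc j" 2] by simp
      also have "exp (x / 2) / 2 ^ Suc j * 2 = exp (x / 2) / 2 ^ j" by simp
      finally show ?thesis by (simp add: y phiT_def)
    qed
    finally show "(\<integral>\<^sup>+w. phiT (stT y w) \<partial>nu) \<le> phiT y" by simp
  qed
  have A: "(\<integral>\<^sup>+\<omega>. phiT (chainF stT (0, 0) \<omega> m) \<partial>csi_space) \<le> phiT (0, 0)"
    by (rule chain_super[of UNIV, OF _ meas drift]) auto
  have "ennreal (exp (c / 2) / 2 ^ m) * emeasure csi_space {\<omega>\<in>space csi_space. c \<le> (\<Sum>i<m. \<bar>fst (\<omega> i)\<bar>)}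
      = (\<integral>\<^sup>+\<omega>. ennreal (exp (c / 2) / 2 ^ m) * indicator {\<omega>\<in>space csi_space. c \<le> (\<Sum>i<m. \<bar>fst (\<omega> i)\<bar>)} \<omega> \<partial>csi_space)"
    using sets by (simp add: nn_integral_cmult_indicator)
  also have "\<dots> \<le> (\<integral>\<^sup>+\<omega>. phiT (chainF stT (0, 0) \<omega> m) \<partial>csi_space)"
    by (intro nn_integral_mono) (auto simp: chainT_eq phiT_def split: split_indicator intro!: ennreal_leI divide_right_mono)
  also have "\<dots> \<le> 1" using A by (simp add: phiT_def)
  finally show "ennreal (exp (c / 2) / 2 ^ m) * emeasure csi_space {\<omega>\<in>space csi_space. c \<le> (\<Sum>i<m. \<bar>fst (\<omega> i)\<bar>)} \<le> 1" .
qed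

lemma jump_inv:
  assumes "0 < lam"
  shows "fst (csi_jump n lam (n, 0) \<omega> k) + snd (csi_jump n lam (n, 0) \<omega> k) \<le> n"
proof (induction k)
  case 0 then show ?case by simp
next
  case (Suc k) then show ?case using step_inv[OF assms] by simp
qed

lemma time_sum: "csi_time n lam s0 \<omega> k = (\<Sum>i<k. csi_hold n lam (csi_jump n lam s0 \<omega> i) (fst (\<omega> i)))"
  by (induction k) auto

lemma proc_le:
  assumes "0 < lam"
  shows "fst (csi_proc n lam (n, 0) \<omega> t) + snd (csi_proc n lam (n, 0) \<omega> t) \<le> n"
  using jump_inv[OF assms] by (simp add: csi_proc_def)

lemma proc_cases:
  assumes t: "0 < t" and pos: "0 < fst (csi_proc n lam s0 \<omega> t) + snd (csi_proc n lam s0 \<omega> t)"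
  shows "\<exists>j. csi_time n lam s0 \<omega> j \<le> t \<and> t < csi_time n lam s0 \<omega> (Suc j) \<and> csi_proc n lam s0 \<omega> t = csi_jump n lam s0 \<omega> j"
proof -
  have ex: "\<exists>k. t < csi_time n lam s0 \<omega> k"
  proof (rule ccontr)
    assume "\<not> ?thesis"
    then have "csi_proc n lam s0 \<omega> t = (0, 0)" by (simp add: csi_proc_def)
    then show False using pos by simp
  qed
  define K where "K = (LEAST k. t < csi_time n lam s0 \<omega> k)"
  have K1: "t < csi_time n lam s0 \<omega> K" unfolding K_def by (rule LeastI_ex[OF ex])
  have K0: "K \<noteq> 0" using K1 t by (cases K) auto
  then obtain j where j: "K = Suc j" by (cases K) auto
  have "\<not> t < csi_time n lam s0 \<omega> j"
    using not_less_Least[of j "\<lambda>k. t < csi_time n lam s0 \<omega> k"] j K_def by simp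
  moreover have "csi_proc n lam s0 \<omega> t = csi_jump n lam s0 \<omega> j"
    using ex by (simp add: csi_proc_def K_def[symmetric] j)
  ultimately show ?thesis using K1 j by (intro exI[of _ j]) auto
qed

lemma hold_bound:
  assumes lam: "0 < lam" and BG: "fst s + snd s \<le> n" and e: "0 < e" and Se: "e \<le> real (fst s + snd s)"
  shows "csi_hold n lam s x \<le> \<bar>x\<bar> / e"
proof -
  have q: "e \<le> csi_qtot n lam s" using qtot_ge[OF lam BG] Se by linarith
  then have q0: "csi_qtot n lam s \<noteq> 0" using e by auto
  have "x / csi_qtot n lam s \<le> \<bar>x\<bar> / csi_qtot n lam s" using q e by (intro divide_right_mono) auto
  also have "\<dots> \<le> \<bar>x\<bar> / e" using q e by (intro divide_left_mono) auto
  finally show ?thesis using q0 by (simp add: csi_hold_def)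
qed

lemma bad_cases:
  fixes n m :: nat and lam t T1 e A :: real
  assumes lam: "0 < lam" and t: "0 < t" "T1 \<le> t" and A: "0 < A" and e: "0 < e"
    and big: "A \<le> real (fst (csi_proc n lam (n, 0) \<omega> t) + snd (csi_proc n lam (n, 0) \<omega> t))"
  shows "(\<exists>j\<ge>m. A \<le> real (fst (csi_jump n lam (n, 0) \<omega> j) + snd (csi_jump n lam (n, 0) \<omega> j)))
    \<or> (\<exists>j. (\<exists>i\<le>j. real (fst (csi_jump n lam (n, 0) \<omega> i) + snd (csi_jump n lam (n, 0) \<omega> i)) < e)
           \<and> A \<le> real (fst (csi_jump n lam (n, 0) \<omega> j) + snd (csi_jump n lam (n, 0) \<omega> j)))
    \<or> T1 * e \<le> (\<Sum>i<m. \<bar>fst (\<omega> i)\<bar>)"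
proof -
  let ?X = "csi_jump n lam (n, 0) \<omega>"
  have pos: "0 < fst (csi_proc n lam (n, 0) \<omega> t) + snd (csi_proc n lam (n, 0) \<omega> t)"
    using big A by (metis of_nat_0_less_iff order_less_le_trans)
  obtain j where j: "csi_time n lam (n, 0) \<omega> j \<le> t" "t < csi_time n lam (n, 0) \<omega> (Suc j)"
    "csi_proc n lam (n, 0) \<omega> t = ?X j"
    using proc_cases[OF t(1) pos] by blast
  have Xj: "A \<le> real (fst (?X j) + snd (?X j))" using big j(3) by simp
  show ?thesis
  proof (cases "m \<le> j")
    case True then show ?thesis using Xj by blast
  next
    case jm: False
    show ?thesis
    proof (cases "\<exists>i\<le>j. real (fst (?X i) + snd (?X i)) < e")
      case True then show ?thesis using Xj by blast
    next
      case False
      then have ge: "\<And>i. i \<le> j \<Longrightarrow> e \<le> real (fst (?X i) + snd (?X i))" by (simp add: not_less)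
      have "csi_time n lam (n, 0) \<omega> (Suc j) = (\<Sum>i<Suc j. csi_hold n lam (?X i) (fst (\<omega> i)))"
        by (rule time_sum)
      also have "\<dots> \<le> (\<Sum>i<Suc j. \<bar>fst (\<omega> i)\<bar> / e)"
        by (intro sum_mono hold_bound[OF lam jump_inv[OF lam] e ge]) auto
      also have "\<dots> \<le> (\<Sum>i<m. \<bar>fst (\<omega> i)\<bar> / e)"
        using jm e by (intro sum_mono2) auto
      also have "\<dots> = (\<Sum>i<m. \<bar>fst (\<omega> i)\<bar>) / e" by (simp add: sum_divide_distrib)
      finally have "T1 < (\<Sum>i<m. \<bar>fst (\<omega> i)\<bar>) / e" using j(2) t(2) by linarith
      then have "T1 * e < (\<Sum>i<m. \<bar>fst (\<omega> i)\<bar>)" using e by (simp add: less_divide_eq)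
      then show ?thesis by simp
    qed
  qed
qed

lemma conv:
  assumes E: "E \<in> sets csi_space" and le: "ennreal a * emeasure csi_space E \<le> ennreal B" and a: "0 < a" and B: "0 \<le> B"
  shows "measure csi_space E \<le> B / a"
proof -
  interpret prob_space csi_space by (rule prob_csi)
  have "ennreal (a * measure csi_space E) \<le> ennreal B"
    using le a by (simp add: emeasure_eq_measure ennreal_mult)
  then have "a * measure csi_space E \<le> B"
    using a B by (simp add: ennreal_le_iff)
  then show ?thesis using a by (simp add: le_divide_eq mult.commute)
qed

lemma finite_sup:
  fixes g :: "real \<Rightarrow> nat" and n :: nat and I :: "real set"
  assumes "\<And>t. g t \<le> n" "I \<noteq> {}" "c \<le> (SUP t\<in>I. real (g t) / real n)"
  shows "\<exists>t\<in>I. c \<le> real (g t) / real n"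
proof -
  let ?V = "(\<lambda>t. real (g t) / real n) ` I"
  have "?V \<subseteq> (\<lambda>k. real k / real n) ` {..n}" using assms(1) by auto
  then have fin: "finite ?V" by (rule finite_subset) simp
  have ne: "?V \<noteq> {}" using assms(2) by simp
  have "Sup ?V \<in> ?V" using fin ne by (simp add: cSup_eq_Max)
  then show ?thesis using assms(3) by auto
qed

definition alp :: "real \<Rightarrow> real \<Rightarrow> real" where "alp lam th = th / ((3 + th) * lam)"
definition eps :: "real \<Rightarrow> real \<Rightarrow> real" where "eps lam th = min (alp lam th) 1 / 8"
definition T1c :: "real \<Rightarrow> real \<Rightarrow> real" where "T1c lam th = 4 * (2 / dd lam + 1) / eps lam th"
definition cc :: "real \<Rightarrow> real \<Rightarrow> real" where "cc lam th = min (bb lam * alp lam th / 2) 1"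

lemma consts_pos:
  assumes lam: "0 < lam" "lam < 4" and th: "0 < th"
  shows "0 < alp lam th" "0 < eps lam th" "eps lam th \<le> alp lam th / 8" "eps lam th \<le> 1/8"
    "0 < T1c lam th" "0 < cc lam th" "cc lam th \<le> bb lam * alp lam th / 2" "cc lam th \<le> 1"
proof -
  show a: "0 < alp lam th" using lam th by (simp add: alp_def)
  show e: "0 < eps lam th" using a by (simp add: eps_def)
  show "eps lam th \<le> alp lam th / 8" "eps lam th \<le> 1/8" by (simp_all add: eps_def)
  show "0 < T1c lam th" using e kap_facts(8)[OF lam] unfolding T1c_def by (intro divide_pos_pos mult_pos_pos add_pos_pos) auto
  show "0 < cc lam th" using a kap_facts(7)[OF lam] by (simp add: cc_def)
  show "cc lam th \<le> bb lam * alp lam th / 2" "cc lam th \<le> 1" by (simp_all add: cc_def)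
qed

lemma exp_sqrt_bound:
  assumes c: "0 < c" and n: "1 \<le> n"
  shows "exp (- (c * n)) \<le> 1 / (c * sqrt n)"
proof -
  have "sqrt n \<le> n"
  proof -
    have "sqrt n * 1 \<le> sqrt n * sqrt n" using n by (intro mult_left_mono) auto
    then show ?thesis using n by simp
  qed
  then have "c * sqrt n \<le> c * n" using c by simp
  also have "\<dots> \<le> exp (c * n)" using exp_ge_add_one_self[of "c * n"] by linarith
  finally have le: "c * sqrt n \<le> exp (c * n)" .
  have pos: "0 < c * sqrt n" using c n by simp
  have "exp (- (c * n)) = 1 / exp (c * n)" by (simp add: exp_minus field_simps)
  also have "\<dots> \<le> 1 / (c * sqrt n)" using le pos by (intro divide_left_mono) auto
  finally show ?thesis .
qed

lemma main_n:
  fixes lam th :: real and n :: nat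
  assumes lam: "0 < lam" "lam < 4" and th: "0 < th" "th < 1" and n: "1 \<le> n"
  shows "measure csi_space
       {\<omega> \<in> space csi_space.
          (SUP t\<in>{0..1 * sqrt (real n)}.
             real (fst (csi_proc n lam (n, 0) \<omega> (T1c lam th + t)) + snd (csi_proc n lam (n, 0) \<omega> (T1c lam th + t)))
             / real n)
          \<ge> th / ((3 + th) * lam)}
     \<le> 3 / cc lam th / sqrt (real n)"
proof -
  define b where "b = bb lam"
  define d where "d = dd lam"
  define \<alpha> where "\<alpha> = alp lam th"
  define T1 where "T1 = T1c lam th"
  define c where "c = cc lam th"
  define N where "N = real n"
  define e where "e = eps lam th * N"
  define A where "A = \<alpha> * N"
  define h where "h = A / 2"
  define m where "m = nat \<lceil>2 * N / d\<rceil>"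
  have n0: "0 < n" using n by simp
  have N1: "1 \<le> N" using n by (simp add: N_def)
  have b0: "0 < b" and bb: "b \<le> bb lam" using kap_facts(7)[OF lam] by (simp_all add: b_def)
  have d0: "0 < d" and d1: "d \<le> 1" using kap_facts(8,9)[OF lam] by (simp_all add: d_def)
  have a0: "0 < \<alpha>" using consts_pos[OF lam th(1)] by (simp add: \<alpha>_def)
  have e0: "0 < e" using consts_pos[OF lam th(1)] N1 by (simp add: e_def)
  have eh: "4 * e \<le> h"
  proof -
    have "eps lam th * N \<le> \<alpha> / 8 * N" using consts_pos(3)[OF lam th(1)] N1 by (intro mult_right_mono) (auto simp: \<alpha>_def)
    then show ?thesis by (simp add: e_def h_def A_def)
  qed
  have en: "\<not> real (fst (n, 0::nat) + snd (n, 0::nat)) < e"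
  proof -
    have "e \<le> 1/8 * N" using consts_pos(4)[OF lam th(1)] N1 unfolding e_def by (intro mult_right_mono) auto
    then show ?thesis using N1 by (simp add: N_def)
  qed
  have A0: "0 < A" using a0 N1 by (simp add: A_def)
  have T10: "0 < T1" using consts_pos[OF lam th(1)] by (simp add: T1_def)
  have c0: "0 < c" and cb: "c \<le> b * \<alpha> / 2" and c1: "c \<le> 1"
    using consts_pos[OF lam th(1)] by (simp_all add: c_def b_def \<alpha>_def)
  have m1: "2 * N / d \<le> real m" unfolding m_def by linarith
  have m2: "real m \<le> 2 * N / d + 1"
  proof -
    have "0 \<le> 2 * N / d" using N1 d0 by simp
    then show ?thesis unfolding m_def by linarith
  qed
  have dm: "2 * N \<le> d * real m" using m1 d0 by (simp add: divide_le_eq mult.commute)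
  have Nm: "N \<le> real m"
  proof -
    have "2 * N / 1 \<le> 2 * N / d" using N1 d0 d1 by (intro divide_left_mono) auto
    then show ?thesis using m1 N1 by simp
  qed
  have T1e: "T1 * e = 4 * (2 / d + 1) * N"
    using consts_pos(2)[OF lam th(1)] by (simp add: T1_def T1c_def e_def d_def)
  have T1m: "4 * real m \<le> T1 * e"
  proof -
    have "2 * N / d + 1 \<le> (2 / d + 1) * N" using N1 d0 by (simp add: algebra_simps)
    moreover have "4 * (2 / d + 1) * N = 4 * ((2 / d + 1) * N)" by simp
    ultimately show ?thesis using m2 T1e by linarith
  qed
  define aA where "aA = exp (b * A + b * d * real m)"
  define EA where "EA = {\<omega>\<in>space csi_space. \<exists>k. ennreal aA \<le> phiA n lam b (chainF (stA n lam) ((n, 0), 0) \<omega> k)}"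
  define aU where "aU = exp (b * A - b * h)"
  define EU where "EU = {\<omega>\<in>space csi_space. \<exists>k. ennreal aU \<le> phiU n lam b h (chainF (stU n lam e) ((n, 0), False) \<omega> k)}"
  define ET where "ET = {\<omega>\<in>space csi_space. T1 * e \<le> (\<Sum>i<m. \<bar>fst (\<omega> i)\<bar>)}"
  have EAs: "EA \<in> sets csi_space" and EAb: "ennreal aA * emeasure csi_space EA \<le> ennreal (exp (2 * b * real n))"
    unfolding EA_def by (rule villeA[OF lam n0 b0 bb])+
  have EUs: "EU \<in> sets csi_space" and EUb: "ennreal aU * emeasure csi_space EU \<le> 1"
    unfolding EU_def by (rule villeU[OF lam n0 b0 bb eh])+
  have ETs: "ET \<in> sets csi_space" and ETb: "ennreal (exp (T1 * e / 2) / 2 ^ m) * emeasure csi_space ET \<le> 1"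
    unfolding ET_def by (rule markovT)+
  have PA: "measure csi_space EA \<le> exp (- (b * \<alpha> * N))"
  proof -
    have "measure csi_space EA \<le> exp (2 * b * real n) / aA"
      by (rule conv[OF EAs EAb]) (auto simp: aA_def)
    also have "\<dots> = exp (2 * b * N - b * A - b * d * real m)" by (simp add: aA_def N_def exp_diff exp_add)
    also have "\<dots> \<le> exp (- (b * \<alpha> * N))"
    proof -
      have "2 * b * N \<le> b * d * real m" using dm b0 by (simp add: mult.assoc mult_left_mono)
      then show ?thesis by (simp add: A_def algebra_simps)
    qed
    finally show ?thesis .
  qed
  have PU: "measure csi_space EU \<le> exp (- (b * \<alpha> * N / 2))"
  proof -
    have "measure csi_space EU \<le> 1 / aU"
      by (rule conv[OF EUs]) (use EUb in \<open>auto simp: aU_def\<close>)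
    also have "\<dots> = exp (- (b * \<alpha> * N / 2))" by (simp add: aU_def h_def A_def exp_minus field_simps)
    finally show ?thesis .
  qed
  have PT: "measure csi_space ET \<le> exp (- N)"
  proof -
    have "measure csi_space ET \<le> 1 / (exp (T1 * e / 2) / 2 ^ m)"
      by (rule conv[OF ETs]) (use ETb in \<open>auto\<close>)
    also have "\<dots> = 2 ^ m / exp (T1 * e / 2)" by simp
    also have "\<dots> \<le> exp (real m) / exp (2 * real m)"
    proof (rule frac_le)
      have "(2::real) ^ m \<le> exp 1 ^ m"
        using exp_ge_add_one_self[of 1] by (intro power_mono) auto
      also have "\<dots> = exp (real m)" by (simp add: exp_of_nat_mult[symmetric])
      finally show "(2::real) ^ m \<le> exp (real m)" .
      show "exp (2 * real m) \<le> exp (T1 * e / 2)" using T1m by simp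
    qed auto
    also have "\<dots> = exp (- real m)" by (simp add: exp_diff[symmetric])
    also have "\<dots> \<le> exp (- N)" using Nm by simp
    finally show ?thesis .
  qed
  let ?Bd = "{\<omega> \<in> space csi_space.
          (SUP t\<in>{0..1 * sqrt (real n)}.
             real (fst (csi_proc n lam (n, 0) \<omega> (T1c lam th + t)) + snd (csi_proc n lam (n, 0) \<omega> (T1c lam th + t)))
             / real n)
          \<ge> th / ((3 + th) * lam)}"
  have sub: "?Bd \<subseteq> EA \<union> EU \<union> ET"
  proof
    fix \<omega> assume "\<omega> \<in> ?Bd"
    then have sp: "\<omega> \<in> space csi_space" and sup: "th / ((3 + th) * lam) \<le> (SUP t\<in>{0..1 * sqrt (real n)}.
             real (fst (csi_proc n lam (n, 0) \<omega> (T1 + t)) + snd (csi_proc n lam (n, 0) \<omega> (T1 + t))) / real n)"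
      by (auto simp: T1_def)
    obtain t where t: "t \<in> {0..1 * sqrt (real n)}"
      and tt: "th / ((3 + th) * lam) \<le> real (fst (csi_proc n lam (n, 0) \<omega> (T1 + t)) + snd (csi_proc n lam (n, 0) \<omega> (T1 + t))) / real n"
      using finite_sup[where g="\<lambda>t. fst (csi_proc n lam (n, 0) \<omega> (T1 + t)) + snd (csi_proc n lam (n, 0) \<omega> (T1 + t))", OF proc_le[OF lam(1)] _ sup]
      by auto
    have big: "A \<le> real (fst (csi_proc n lam (n, 0) \<omega> (T1 + t)) + snd (csi_proc n lam (n, 0) \<omega> (T1 + t)))"
      using tt N1 by (simp add: A_def \<alpha>_def alp_def N_def le_divide_eq)
    have tpos: "0 < T1 + t" using T10 t by simp
    let ?X = "csi_jump n lam (n, 0) \<omega>"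
    have tT: "T1 \<le> T1 + t" using t by simp
    from bad_cases[OF lam(1) tpos tT A0 e0 big, of m]
    show "\<omega> \<in> EA \<union> EU \<union> ET"
    proof (elim disjE exE conjE)
      fix j assume jm: "m \<le> j" and Aj: "A \<le> real (fst (?X j) + snd (?X j))"
      have nz: "?X j \<noteq> (0, 0)" using Aj A0 by auto
      have "A \<le> ff n lam (?X j)" using Aj ff_bounds(1)[OF lam n0 jump_inv[OF lam(1), where \<omega>=\<omega> and k=j]] by linarith
      moreover have "b * d * real m \<le> b * d * real j" using jm b0 d0 by simp
      ultimately have "b * A + b * d * real m \<le> b * ff n lam (?X j) + b * dd lam * real j"
        using b0 by (simp add: d_def add_mono mult_left_mono)
      then have "ennreal aA \<le> phiA n lam b (chainF (stA n lam) ((n, 0), 0) \<omega> j)"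
        using nz by (simp add: aA_def phiA_def chainA_eq)
      then show ?thesis using sp by (auto simp: EA_def)
    next
      fix j i assume ij: "i \<le> j" and ie: "real (fst (?X i) + snd (?X i)) < e"
        and Aj: "A \<le> real (fst (?X j) + snd (?X j))"
      have "A \<le> ff n lam (?X j)" using Aj ff_bounds(1)[OF lam n0 jump_inv[OF lam(1), where \<omega>=\<omega> and k=j]] by linarith
      then have "b * A - b * h \<le> b * ff n lam (?X j) - b * h" using b0 by simp
      moreover have "chainF (stU n lam e) ((n, 0), False) \<omega> j = (?X j, True)"
        using chainU_eq[OF en, of n lam \<omega> j] ij ie by auto
      ultimately have "ennreal aU \<le> phiU n lam b h (chainF (stU n lam e) ((n, 0), False) \<omega> j)"
        by (simp add: aU_def phiU_def)
      then show ?thesis using sp by (auto simp: EU_def)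
    next
      assume "T1 * e \<le> (\<Sum>i<m. \<bar>fst (\<omega> i)\<bar>)"
      then show ?thesis using sp by (auto simp: ET_def)
    qed
  qed
  interpret P: prob_space csi_space by (rule prob_csi)
  have "measure csi_space ?Bd \<le> measure csi_space (EA \<union> EU \<union> ET)"
  proof (cases "?Bd \<in> sets csi_space")
    case True then show ?thesis using sub EAs EUs ETs by (intro P.finite_measure_mono) auto
  next
    case False then show ?thesis by (simp add: measure_notin_sets)
  qed
  also have "\<dots> \<le> measure csi_space EA + measure csi_space EU + measure csi_space ET"
  proof -
    have "measure csi_space (EA \<union> EU \<union> ET) \<le> measure csi_space (EA \<union> EU) + measure csi_space ET"
      using EAs EUs ETs by (intro measure_Un_le) auto
    moreover have "measure csi_space (EA \<union> EU) \<le> measure csi_space EA + measure csi_space EU"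
      using EAs EUs by (intro measure_Un_le) auto
    ultimately show ?thesis by linarith
  qed
  also have "\<dots> \<le> exp (- (c * N)) + exp (- (c * N)) + exp (- (c * N))"
  proof -
    have "exp (- (b * \<alpha> * N)) \<le> exp (- (c * N))"
    proof -
      have "0 < b * \<alpha>" using b0 a0 by simp
      then have "c \<le> b * \<alpha>" using cb by linarith
      then have "c * N \<le> b * \<alpha> * N" using N1 by (intro mult_right_mono) auto
      then show ?thesis by simp
    qed
    moreover have "exp (- (b * \<alpha> * N / 2)) \<le> exp (- (c * N))"
    proof -
      have "c * N \<le> b * \<alpha> / 2 * N" using cb N1 by (intro mult_right_mono) auto
      then show ?thesis by simp
    qed
    moreover have "exp (- N) \<le> exp (- (c * N))"
    proof -
      have "c * N \<le> 1 * N" using c1 N1 by (intro mult_right_mono) auto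
      then show ?thesis by simp
    qed
    ultimately show ?thesis using PA PU PT by linarith
  qed
  also have "\<dots> = 3 * exp (- (c * N))" by simp
  also have "\<dots> \<le> 3 * (1 / (c * sqrt N))" using exp_sqrt_bound[OF c0 N1] by simp
  also have "\<dots> = 3 / c / sqrt (real n)" by (simp add: N_def)
  finally show ?thesis by (simp add: c_def)
qed

theorem lemma5p1:
  fixes lam \<theta> :: real
  assumes "0 < lam" and "lam < 4" and "0 < \<theta>" and "\<theta> < 1"
  shows "\<exists>T1 > 0. \<exists>N2::nat. \<exists>C2 > 0. \<exists>C3::real. \<forall>n::nat \<ge> N2.
     measure csi_space
       {\<omega> \<in> space csi_space.
          (SUP t\<in>{0..C2 * sqrt (real n)}.
             real (fst (csi_proc n lam (n, 0) \<omega> (T1 + t)) + snd (csi_proc n lam (n, 0) \<omega> (T1 + t)))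
             / real n)
          \<ge> \<theta> / ((3 + \<theta>) * lam)}
     \<le> C3 / sqrt (real n)"
proof -
  have T: "0 < T1c lam \<theta>" using consts_pos[OF assms(1,2,3)] by simp
  have H: "\<And>n::nat. 1 \<le> n \<Longrightarrow> measure csi_space
       {\<omega> \<in> space csi_space.
          (SUP t\<in>{0..1 * sqrt (real n)}.
             real (fst (csi_proc n lam (n, 0) \<omega> (T1c lam \<theta> + t)) + snd (csi_proc n lam (n, 0) \<omega> (T1c lam \<theta> + t)))
             / real n)
          \<ge> \<theta> / ((3 + \<theta>) * lam)}
     \<le> 3 / cc lam \<theta> / sqrt (real n)"
    by (rule main_n[OF assms])
  show ?thesis
    apply (rule exI[of _ "T1c lam \<theta>"], rule conjI[OF T])
    apply (rule exI[of _ 1], rule exI[of _ 1], rule conjI, simp)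
    apply (rule exI[of _ "3 / cc lam \<theta>"])
    using H by auto
qed

end
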